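(* In the setting of the context, fix a round $t$ and suppose $\frac12-9L^2\eta_t^2K^2N\sum_{i=1}^Np_i^2\ge C>0$ and $\frac{L\eta_t^2K}{2}-\frac{\eta_t}{2}\le0$. Under (A1)–(A3), $$\mathbb{E}f(V_{t+1})\le\mathbb{E}f(Q_t)-C\eta_tK\,\mathbb{E}\|\nabla f(Q_t)\|^2+\frac32L^2\eta_t^3K^2N(\sigma_l^2+6K\sigma_g^2)\sum_{i=1}^Np_i^2+\frac{L\eta_t^2K^2N}{2}\sigma_l^2\sum_{i=1}^Np_i^2.$$
   Context: Fix integers $N,K\ge1$; matrices in $\mathbb{R}^{d\times k}$ with Frobenius norm $\|\cdot\|$. Client losses $f_i$ are differentiable, $p_i\ge0$ with $\sum_ip_i=1$, $f=\sum_ip_if_i$. Stochastic gradients $\tilde\nabla f_i(W)$ use fresh randomness per call. (A1) $f$, each $f_i$ and each per-sample loss have $L$-Lipschitz gradients. (A2) Conditionally on the past, $\mathbb{E}\tilde\nabla f_i(W)=\nabla f_i(W)$, $\mathbb{E}\|\tilde\nabla f_i(W)-\nabla f_i(W)\|^2\le\sigma_l^2$. (A3) $\mathbb{E}\|\nabla f(W)-\nabla f_i(W)\|^2\le\sigma_g^2$ for all $W,i$, $\sigma_g^2>0$. $Q_t$ is the (random) global model at round $t$ of the existing heterogeneous-LoRA scheme. Auxiliary full-rank iterate: $Q^i_{t,0}=Q_t$, $Q^i_{t,\tau+1}=Q^i_{t,\tau}-\eta_t\tilde\nabla f_i(Q^i_{t,\tau})$ for $\tau=0,\dots,K-1$,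 and $V_{t+1}=\sum_ip_i\big(Q_t-\eta_t\sum_{\tau=0}^{K-1}\tilde\nabla f_i(Q^i_{t,\tau})\big)$. *)

theory Defs
  imports "HOL-Probability.Probability"
begin

type_synonym ('d, 'k) mat = "real ^ 'k ^ 'd"
  \<comment> \<open>d x k real matrices; the norm of real^'k^'d is the Frobenius norm\<close>

text \<open>Auxiliary full-rank local iterate Q^i_{t,tau}, for a fixed realisation
  xi of the per-call noise: xi i tau is the randomness of the tau-th call of client i.\<close>
fun local_iter ::
  "(nat \<Rightarrow> 'm::real_vector \<Rightarrow> 'n \<Rightarrow> 'm) \<Rightarrow> real \<Rightarrow> (nat \<Rightarrow> nat \<Rightarrow> 'n) \<Rightarrow> 'm \<Rightarrow> nat \<Rightarrow> nat \<Rightarrow> 'm"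
where
  "local_iter G \<eta> xi W0 i 0 = W0"
| "local_iter G \<eta> xi W0 i (Suc \<tau>) =
     local_iter G \<eta> xi W0 i \<tau> - \<eta> *\<^sub>R G i (local_iter G \<eta> xi W0 i \<tau>) (xi i \<tau>)"

definition V_next ::
  "(nat \<Rightarrow> 'm::real_vector \<Rightarrow> 'n \<Rightarrow> 'm) \<Rightarrow> (nat \<Rightarrow> real) \<Rightarrow> nat \<Rightarrow> nat \<Rightarrow> real \<Rightarrow> (nat \<Rightarrow> nat \<Rightarrow> 'n) \<Rightarrow> 'm \<Rightarrow> 'm"
where
  "V_next G p N K \<eta> xi W0 =
     (\<Sum>i\<in>{1..N}. p i *\<^sub>R (W0 - \<eta> *\<^sub>R (\<Sum>\<tau><K. G i (local_iter G \<eta> xi W0 i \<tau>) (xi i \<tau>))))"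

end

theory Submission
  imports Defs
begin


lemma norm_sum_sq:
  fixes v :: "'i \<Rightarrow> 'a::real_normed_vector"
  shows "(norm (\<Sum>j\<in>J. c j *\<^sub>R v j))\<^sup>2 \<le> (\<Sum>j\<in>J. (c j)\<^sup>2) * (\<Sum>j\<in>J. (norm (v j))\<^sup>2)"
proof -
  have "norm (\<Sum>j\<in>J. c j *\<^sub>R v j) \<le> (\<Sum>j\<in>J. \<bar>c j\<bar> * norm (v j))"
    by (rule order_trans[OF norm_sum]) simp
  then have "(norm (\<Sum>j\<in>J. c j *\<^sub>R v j))\<^sup>2 \<le> (\<Sum>j\<in>J. \<bar>c j\<bar> * norm (v j))\<^sup>2"
    by (intro power_mono) auto
  also have "\<dots> \<le> (\<Sum>j\<in>J. \<bar>c j\<bar>\<^sup>2) * (\<Sum>j\<in>J. (norm (v j))\<^sup>2)"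
    by (rule Cauchy_Schwarz_ineq_sum)
  finally show ?thesis by simp
qed

lemma norm_sum_sq1:
  fixes v :: "'i \<Rightarrow> 'a::real_normed_vector"
  shows "(norm (\<Sum>j\<in>J. v j))\<^sup>2 \<le> real (card J) * (\<Sum>j\<in>J. (norm (v j))\<^sup>2)"
  using norm_sum_sq[of "\<lambda>_. 1" v J] by simp

lemma smooth_aux:
  fixes u u' :: "real \<Rightarrow> real"
  assumes "\<And>t. 0 \<le> t \<Longrightarrow> t \<le> 1 \<Longrightarrow> DERIV u t :> u' t"
    and "\<And>t. 0 \<le> t \<Longrightarrow> t \<le> 1 \<Longrightarrow> u' t \<le> 0"
  shows "u 1 \<le> u 0"
proof -
  obtain z where "0 < z" "z < 1" "u 1 - u 0 = (1 - 0) * u' z"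
    using MVT2[of 0 1 u u'] assms(1) by auto
  with assms(2)[of z] show ?thesis by simp
qed

lemma smooth:
  fixes f :: "'a::real_inner \<Rightarrow> real"
  assumes d: "\<And>W. (f has_derivative (\<lambda>H. gf W \<bullet> H)) (at W)"
    and lip: "\<And>W W'. norm (gf W - gf W') \<le> L * norm (W - W')"
  shows "f y \<le> f x + gf x \<bullet> (y - x) + L / 2 * (norm (y - x))\<^sup>2"
    and "f x + gf x \<bullet> (y - x) - L / 2 * (norm (y - x))\<^sup>2 \<le> f y"
proof -
  define h where "h = y - x"
  have D: "DERIV (\<lambda>t. f (x + t *\<^sub>R h)) t :> gf (x + t *\<^sub>R h) \<bullet> h" for t
  proof -
    have "((\<lambda>t. f (x + t *\<^sub>R h)) has_derivative (\<lambda>s. gf (x + t *\<^sub>R h) \<bullet> (s *\<^sub>R h))) (at t)"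
      by (rule has_derivative_compose[where g=f, OF _ d]) (auto intro!: derivative_eq_intros)
    moreover have "(\<lambda>s. gf (x + t *\<^sub>R h) \<bullet> (s *\<^sub>R h)) = (*) (gf (x + t *\<^sub>R h) \<bullet> h)"
      by (auto simp: fun_eq_iff)
    ultimately show ?thesis
      unfolding has_field_derivative_def by simp
  qed
  have bnd: "\<bar>(gf (x + t *\<^sub>R h) - gf x) \<bullet> h\<bar> \<le> L * t * (norm h)\<^sup>2" if "0 \<le> t" for t
  proof -
    have "\<bar>(gf (x + t *\<^sub>R h) - gf x) \<bullet> h\<bar> \<le> norm (gf (x + t *\<^sub>R h) - gf x) * norm h"
      by (rule Cauchy_Schwarz_ineq2)
    also have "\<dots> \<le> (L * norm (t *\<^sub>R h)) * norm h"
      using lip[of "x + t *\<^sub>R h" x] by (intro mult_right_mono) auto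
    also have "\<dots> = L * t * (norm h)\<^sup>2" using that by (simp add: power2_eq_square)
    finally show ?thesis .
  qed
  have "(\<lambda>t. f (x + t *\<^sub>R h) - t * (gf x \<bullet> h) - L / 2 * t\<^sup>2 * (norm h)\<^sup>2) 1
      \<le> (\<lambda>t. f (x + t *\<^sub>R h) - t * (gf x \<bullet> h) - L / 2 * t\<^sup>2 * (norm h)\<^sup>2) 0"
  proof (rule smooth_aux)
    fix t :: real assume t: "0 \<le> t" "t \<le> 1"
    show "DERIV (\<lambda>t. f (x + t *\<^sub>R h) - t * (gf x \<bullet> h) - L / 2 * t\<^sup>2 * (norm h)\<^sup>2) t :>
      gf (x + t *\<^sub>R h) \<bullet> h - gf x \<bullet> h - L * t * (norm h)\<^sup>2"
      by (rule derivative_eq_intros D refl)+ (simp add: power2_eq_square)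
    show "gf (x + t *\<^sub>R h) \<bullet> h - gf x \<bullet> h - L * t * (norm h)\<^sup>2 \<le> 0"
      using bnd[OF t(1)] by (simp add: inner_diff_left)
  qed
  then show "f y \<le> f x + gf x \<bullet> (y - x) + L / 2 * (norm (y - x))\<^sup>2"
    by (simp add: h_def)
  have "(\<lambda>t. - (f (x + t *\<^sub>R h) - t * (gf x \<bullet> h) + L / 2 * t\<^sup>2 * (norm h)\<^sup>2)) 1
      \<le> (\<lambda>t. - (f (x + t *\<^sub>R h) - t * (gf x \<bullet> h) + L / 2 * t\<^sup>2 * (norm h)\<^sup>2)) 0"
  proof (rule smooth_aux)
    fix t :: real assume t: "0 \<le> t" "t \<le> 1"
    show "DERIV (\<lambda>t. - (f (x + t *\<^sub>R h) - t * (gf x \<bullet> h) + L / 2 * t\<^sup>2 * (norm h)\<^sup>2)) t :>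
      - (gf (x + t *\<^sub>R h) \<bullet> h - gf x \<bullet> h + L * t * (norm h)\<^sup>2)"
      by (rule derivative_eq_intros D refl)+ (simp add: power2_eq_square)
    show "- (gf (x + t *\<^sub>R h) \<bullet> h - gf x \<bullet> h + L * t * (norm h)\<^sup>2) \<le> 0"
      using bnd[OF t(1)] by (simp add: inner_diff_left)
  qed
  then show "f x + gf x \<bullet> (y - x) - L / 2 * (norm (y - x))\<^sup>2 \<le> f y"
    by (simp add: h_def)
qed



definition sqi :: "'w measure \<Rightarrow> ('w \<Rightarrow> 'a::euclidean_space) \<Rightarrow> bool" where
  "sqi M X \<longleftrightarrow> X \<in> borel_measurable M \<and> integrable M (\<lambda>\<omega>. (norm (X \<omega>))\<^sup>2)"

lemma sq_add_le: "(norm (x + y :: 'v::real_normed_vector))\<^sup>2 \<le> 2 * (norm x)\<^sup>2 + 2 * (norm y)\<^sup>2"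
proof -
  have "(norm (x + y))\<^sup>2 \<le> (norm x + norm y)\<^sup>2" by (intro power_mono norm_triangle_ineq) auto
  also have "\<dots> \<le> 2 * (norm x)\<^sup>2 + 2 * (norm y)\<^sup>2"
  proof -
    have e: "(norm x + norm y)\<^sup>2 + (norm x - norm y)\<^sup>2 = 2 * (norm x)\<^sup>2 + 2 * (norm y)\<^sup>2"
      by (simp add: power2_eq_square algebra_simps)
    have "0 \<le> (norm x - norm y)\<^sup>2" by simp
    with e show ?thesis by linarith
  qed
  finally show ?thesis .
qed

lemma inner_abs_le: "\<bar>x \<bullet> (y::'v::real_inner)\<bar> \<le> (norm x)\<^sup>2 + (norm y)\<^sup>2"
proof -
  have "\<bar>x \<bullet> y\<bar> \<le> norm x * norm y" by (rule Cauchy_Schwarz_ineq2)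
  also have "\<dots> \<le> (norm x)\<^sup>2 + (norm y)\<^sup>2"
  proof -
    have e: "2 * (norm x * norm y) + (norm x - norm y)\<^sup>2 = (norm x)\<^sup>2 + (norm y)\<^sup>2"
      by (simp add: power2_eq_square algebra_simps)
    have "0 \<le> (norm x - norm y)\<^sup>2" "0 \<le> norm x * norm y" by simp_all
    with e show ?thesis by linarith
  qed
  finally show ?thesis .
qed

context prob_space
begin

lemma sqi_le:
  fixes X :: "'a \<Rightarrow> 'v::euclidean_space" and Y :: "'a \<Rightarrow> 'u::euclidean_space"
  assumes "X \<in> borel_measurable M" "sqi M Y" "\<And>\<omega>. \<omega> \<in> space M \<Longrightarrow> norm (X \<omega>) \<le> norm (Y \<omega>)"
  shows "sqi M X"
  unfolding sqi_def
proof
  show "X \<in> borel_measurable M" by fact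
  show "integrable M (\<lambda>\<omega>. (norm (X \<omega>))\<^sup>2)"
  proof -
    have b: "\<omega> \<in> space M \<Longrightarrow> norm ((norm (X \<omega>))\<^sup>2) \<le> norm ((norm (Y \<omega>))\<^sup>2)" for \<omega>
      using assms(3)[of \<omega>] by (simp add: power_mono)
    have m: "(\<lambda>\<omega>. (norm (X \<omega>))\<^sup>2) \<in> borel_measurable M" using assms(1) by measurable
    have i: "integrable M (\<lambda>\<omega>. (norm (Y \<omega>))\<^sup>2)" using assms(2) unfolding sqi_def by auto
    show ?thesis
      by (rule Bochner_Integration.integrable_bound[OF i m]) (rule AE_I2, rule b)
  qed
qed

lemma sqi_const: "sqi M (\<lambda>_. c)"
  unfolding sqi_def by auto

lemma sqi_add: assumes "sqi M X" "sqi M Y" shows "sqi M (\<lambda>\<omega>. X \<omega> + Y \<omega>)"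
  unfolding sqi_def
proof
  show m: "(\<lambda>\<omega>. X \<omega> + Y \<omega>) \<in> borel_measurable M" using assms unfolding sqi_def by auto
  show "integrable M (\<lambda>\<omega>. (norm (X \<omega> + Y \<omega>))\<^sup>2)"
  proof -
    have b: "norm ((norm (X \<omega> + Y \<omega>))\<^sup>2) \<le> norm (2 * (norm (X \<omega>))\<^sup>2 + 2 * (norm (Y \<omega>))\<^sup>2)" for \<omega>
      using sq_add_le[of "X \<omega>" "Y \<omega>"] by simp
    have m2: "(\<lambda>\<omega>. (norm (X \<omega> + Y \<omega>))\<^sup>2) \<in> borel_measurable M" using m by measurable
    have i: "integrable M (\<lambda>\<omega>. 2 * (norm (X \<omega>))\<^sup>2 + 2 * (norm (Y \<omega>))\<^sup>2)"
      using assms unfolding sqi_def by auto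
    show ?thesis
      by (rule Bochner_Integration.integrable_bound[OF i m2]) (rule AE_I2, rule b)
  qed
qed

lemma sqi_scaleR: assumes "sqi M X" shows "sqi M (\<lambda>\<omega>. c *\<^sub>R X \<omega>)"
  using assms unfolding sqi_def by (auto simp: power_mult_distrib)

lemma sqi_uminus: assumes "sqi M X" shows "sqi M (\<lambda>\<omega>. - X \<omega>)"
  using sqi_scaleR[OF assms, of "-1"] by simp

lemma sqi_diff: assumes "sqi M X" "sqi M Y" shows "sqi M (\<lambda>\<omega>. X \<omega> - Y \<omega>)"
  using sqi_add[OF assms(1) sqi_uminus[OF assms(2)]] by simp

lemma sqi_sum: "(\<And>j. j \<in> J \<Longrightarrow> sqi M (X j)) \<Longrightarrow> sqi M (\<lambda>\<omega>. \<Sum>j\<in>J. X j \<omega>)"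
proof (induction J rule: infinite_finite_induct)
  case (insert x F)
  then show ?case using sqi_add[of "X x" "\<lambda>\<omega>. \<Sum>j\<in>F. X j \<omega>"] by simp
qed (auto simp: sqi_const)

lemma sqi_norm: assumes "sqi M X" shows "sqi M (\<lambda>\<omega>. norm (X \<omega>))"
  using assms unfolding sqi_def by auto

lemma sqi_int: "sqi M X \<Longrightarrow> integrable M (\<lambda>\<omega>. (norm (X \<omega>))\<^sup>2)"
  unfolding sqi_def by auto

lemma sqi_inner:
  fixes X Y :: "'a \<Rightarrow> 'v::euclidean_space"
  assumes "sqi M X" "sqi M Y" shows "integrable M (\<lambda>\<omega>. X \<omega> \<bullet> Y \<omega>)"
proof -
  have b: "norm (X \<omega> \<bullet> Y \<omega>) \<le> norm ((norm (X \<omega>))\<^sup>2 + (norm (Y \<omega>))\<^sup>2)" for \<omega>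
    using inner_abs_le[of "X \<omega>" "Y \<omega>"] by simp
  have mX: "X \<in> borel_measurable M" and mY: "Y \<in> borel_measurable M" using assms unfolding sqi_def by auto
  have m2: "(\<lambda>\<omega>. X \<omega> \<bullet> Y \<omega>) \<in> borel_measurable M" using mX mY by (rule borel_measurable_inner)
  have i: "integrable M (\<lambda>\<omega>. (norm (X \<omega>))\<^sup>2 + (norm (Y \<omega>))\<^sup>2)"
    using assms unfolding sqi_def by auto
  show ?thesis
    by (rule Bochner_Integration.integrable_bound[OF i m2]) (rule AE_I2, rule b)
qed

end


lemma local_iter_cong:
  assumes "\<And>s. s < \<tau> \<Longrightarrow> xi i s = xi' i s"
  shows "local_iter G \<eta> xi W0 i \<tau> = local_iter G \<eta> xi' W0 i \<tau>"
  using assms by (induction \<tau>) auto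

locale LS = prob_space M for M :: "'w measure" +
  fixes S :: "'n measure"
    and N K :: nat and \<eta> \<sigma>l L :: real
    and G :: "nat \<Rightarrow> ('d::finite, 'k::finite) mat \<Rightarrow> 'n \<Rightarrow> ('d, 'k) mat"
    and gfi :: "nat \<Rightarrow> ('d, 'k) mat \<Rightarrow> ('d, 'k) mat"
    and Q :: "'w \<Rightarrow> ('d, 'k) mat"
    and \<xi> :: "nat \<Rightarrow> nat \<Rightarrow> 'w \<Rightarrow> 'n"
  assumes N: "N \<ge> 1" and K: "K \<ge> 1"
    and Q_meas: "Q \<in> borel_measurable M"
    and xi_meas: "\<And>i \<tau>. \<xi> i \<tau> \<in> measurable M S"
    and G_meas: "\<And>i. i \<in> {1..N} \<Longrightarrow> (\<lambda>(W, x). G i W x) \<in> borel_measurable (borel \<Otimes>\<^sub>M S)"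
    and xi_indep: "prob_space.indep_vars M (\<lambda>_. S) (\<lambda>(i, \<tau>). \<xi> i \<tau>) ({1..N} \<times> {..<K})"
    and Q_indep: "prob_space.indep_set M (sets (vimage_algebra (space M) Q borel))
                    (sets (vimage_algebra (space M)
                       (\<lambda>\<omega>. restrict (\<lambda>(i, \<tau>). \<xi> i \<tau> \<omega>) ({1..N} \<times> {..<K}))
                       (\<Pi>\<^sub>M j\<in>{1..N} \<times> {..<K}. S)))"
    and A1_fi: "\<And>i W W'. i \<in> {1..N} \<Longrightarrow> norm (gfi i W - gfi i W') \<le> L * norm (W - W')"
    and A2_int: "\<And>i \<tau> W. i \<in> {1..N} \<Longrightarrow> \<tau> < K \<Longrightarrow> integrable M (\<lambda>\<omega>. G i W (\<xi> i \<tau> \<omega>))"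
    and A2_unbiased: "\<And>i \<tau> W. i \<in> {1..N} \<Longrightarrow> \<tau> < K \<Longrightarrow>
                        (\<integral>\<omega>. G i W (\<xi> i \<tau> \<omega>) \<partial>M) = gfi i W"
    and A2_var_int: "\<And>i \<tau> W. i \<in> {1..N} \<Longrightarrow> \<tau> < K \<Longrightarrow>
                        integrable M (\<lambda>\<omega>. (norm (G i W (\<xi> i \<tau> \<omega>) - gfi i W))\<^sup>2)"
    and A2_var: "\<And>i \<tau> W. i \<in> {1..N} \<Longrightarrow> \<tau> < K \<Longrightarrow>
                        (\<integral>\<omega>. (norm (G i W (\<xi> i \<tau> \<omega>) - gfi i W))\<^sup>2 \<partial>M) \<le> \<sigma>l\<^sup>2"
begin


abbreviation "I \<equiv> {1..N} \<times> {..<K}"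
definition "Xi \<omega> = restrict (\<lambda>(i, \<tau>). \<xi> i \<tau> \<omega>) I"
abbreviation "PS \<equiv> (\<Pi>\<^sub>M j\<in>I. S)"
definition "Pd j = distr M S ((\<lambda>(i, \<tau>). \<xi> i \<tau>) j)"

lemma Xi_meas: "Xi \<in> measurable M PS"
  unfolding Xi_def by (rule measurable_restrict) (auto simp: xi_meas split: prod.splits)

lemma Pd_prob: "prob_space (Pd j)"
  unfolding Pd_def by (rule prob_space_distr) (auto simp: xi_meas split: prod.splits)

lemma I_ne: "I \<noteq> {}" using N K by (auto simp: lessThan_empty_iff)

lemma distr_Xi: "distr M PS Xi = (\<Pi>\<^sub>M j\<in>I. Pd j)"
proof -
  have "distr M (\<Pi>\<^sub>M j\<in>I. S) (\<lambda>x. \<lambda>j\<in>I. (\<lambda>(i, \<tau>). \<xi> i \<tau>) j x) = (\<Pi>\<^sub>M j\<in>I. distr M S ((\<lambda>(i, \<tau>). \<xi> i \<tau>) j))"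
    using xi_indep I_ne indep_vars_iff_distr_eq_PiM[where I=I and M'="\<lambda>_. S" and X="\<lambda>(i, \<tau>). \<xi> i \<tau>"] N K
    by (auto simp: xi_meas split: prod.splits)
  moreover have "(\<lambda>x. \<lambda>j\<in>I. (\<lambda>(i, \<tau>). \<xi> i \<tau>) j x) = Xi"
    by (auto simp: Xi_def fun_eq_iff split: prod.splits)
  ultimately show ?thesis by (simp add: Pd_def)
qed

lemma distr_eq:
  "distr M borel Q \<Otimes>\<^sub>M (\<Pi>\<^sub>M j\<in>I. Pd j) = distr M (borel \<Otimes>\<^sub>M PS) (\<lambda>\<omega>. (Q \<omega>, Xi \<omega>))"
proof -
  have QX: "(\<lambda>\<omega>. (Q \<omega>, Xi \<omega>)) \<in> measurable M (borel \<Otimes>\<^sub>M PS)"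
    using Q_meas Xi_meas by (rule measurable_Pair)
  interpret p1: prob_space "distr M borel Q" by (rule prob_space_distr) (rule Q_meas)
  interpret p2: prob_space "distr M PS Xi" by (rule prob_space_distr) (rule Xi_meas)
  have "distr M borel Q \<Otimes>\<^sub>M distr M PS Xi = distr M (borel \<Otimes>\<^sub>M PS) (\<lambda>\<omega>. (Q \<omega>, Xi \<omega>))"
  proof (rule pair_measure_eqI)
    show "sigma_finite_measure (distr M borel Q)" "sigma_finite_measure (distr M PS Xi)"
      by unfold_locales
    show "sets (distr M borel Q \<Otimes>\<^sub>M distr M PS Xi) = sets (distr M (borel \<Otimes>\<^sub>M PS) (\<lambda>\<omega>. (Q \<omega>, Xi \<omega>)))"
      by simp
    fix A B assume A: "A \<in> sets (distr M borel Q)" and B: "B \<in> sets (distr M PS Xi)"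
    then have A': "A \<in> sets borel" and B': "B \<in> sets PS" by auto
    have 1: "Q -` A \<inter> space M \<in> sets (vimage_algebra (space M) Q borel)"
      using A' Q_meas by (auto simp: sets_vimage_algebra2 measurable_def)
    have 2: "Xi -` B \<inter> space M \<in> sets (vimage_algebra (space M) (\<lambda>\<omega>. restrict (\<lambda>(i, \<tau>). \<xi> i \<tau> \<omega>) I) PS)"
      using B' Xi_meas unfolding Xi_def[abs_def] by (subst sets_vimage_algebra2) (auto simp: measurable_def)
    have "prob ((Q -` A \<inter> space M) \<inter> (Xi -` B \<inter> space M)) = prob (Q -` A \<inter> space M) * prob (Xi -` B \<inter> space M)"
      by (rule indep_setD[OF Q_indep 1 2])
    moreover have "(\<lambda>\<omega>. (Q \<omega>, Xi \<omega>)) -` (A \<times> B) \<inter> space M = (Q -` A \<inter> space M) \<inter> (Xi -` B \<inter> space M)"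
      by auto
    ultimately show "emeasure (distr M borel Q) A * emeasure (distr M PS Xi) B = emeasure (distr M (borel \<Otimes>\<^sub>M PS) (\<lambda>\<omega>. (Q \<omega>, Xi \<omega>))) (A \<times> B)"
      using A' B' Q_meas Xi_meas QX
      by (simp add: emeasure_distr emeasure_eq_measure ennreal_mult)
  qed
  then show ?thesis unfolding distr_Xi .
qed

definition "Wp i \<tau> = (\<lambda>(q, x). local_iter G \<eta> (\<lambda>a b. x (a, b)) q i \<tau>)"
definition "nsp i \<tau> = (\<lambda>z. G i (Wp i \<tau> z) (snd z (i, \<tau>)) - gfi i (Wp i \<tau> z))"

lemma gfi_meas: "i \<in> {1..N} \<Longrightarrow> gfi i \<in> borel_measurable borel"
proof -
  assume i: "i \<in> {1..N}"
  have "(max L 0)-lipschitz_on UNIV (gfi i)"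
  proof (rule lipschitz_onI)
    fix x y :: "('d, 'k) mat"
    have "dist (gfi i x) (gfi i y) \<le> L * dist x y" using A1_fi[OF i] by (simp add: dist_norm)
    also have "\<dots> \<le> max L 0 * dist x y" by (intro mult_right_mono) auto
    finally show "dist (gfi i x) (gfi i y) \<le> max L 0 * dist x y" .
  qed auto
  then show ?thesis by (intro borel_measurable_continuous_onI lipschitz_on_continuous_on)
qed

lemma G_meas': "i \<in> {1..N} \<Longrightarrow> f \<in> measurable N' borel \<Longrightarrow> g \<in> measurable N' S \<Longrightarrow>
   (\<lambda>z. G i (f z) (g z)) \<in> borel_measurable N'"
  using measurable_compose[OF measurable_Pair G_meas] by simp

lemma Wp_meas: "i \<in> {1..N} \<Longrightarrow> \<tau> \<le> K \<Longrightarrow> Wp i \<tau> \<in> borel_measurable (borel \<Otimes>\<^sub>M PS)"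
proof (induction \<tau>)
  case 0
  then show ?case by (simp add: Wp_def case_prod_beta')
next
  case (Suc \<tau>)
  have c: "(\<lambda>z::('d,'k) mat \<times> (nat \<times> nat \<Rightarrow> 'n). snd z (i, \<tau>)) \<in> measurable (borel \<Otimes>\<^sub>M PS) S"
    using Suc.prems by (intro measurable_compose[OF measurable_snd measurable_component_singleton]) auto
  have "Wp i (Suc \<tau>) = (\<lambda>z. Wp i \<tau> z - \<eta> *\<^sub>R G i (Wp i \<tau> z) (snd z (i, \<tau>)))"
    by (auto simp: Wp_def fun_eq_iff)
  moreover have "(\<lambda>z. Wp i \<tau> z - \<eta> *\<^sub>R G i (Wp i \<tau> z) (snd z (i, \<tau>))) \<in> borel_measurable (borel \<Otimes>\<^sub>M PS)"
    using Suc G_meas'[OF Suc.prems(1) _ c] by auto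
  ultimately show ?case by simp
qed

lemma nsp_meas: "i \<in> {1..N} \<Longrightarrow> \<tau> < K \<Longrightarrow> nsp i \<tau> \<in> borel_measurable (borel \<Otimes>\<^sub>M PS)"
proof -
  assume i: "i \<in> {1..N}" and t: "\<tau> < K"
  have c: "(\<lambda>z::('d,'k) mat \<times> (nat \<times> nat \<Rightarrow> 'n). snd z (i, \<tau>)) \<in> measurable (borel \<Otimes>\<^sub>M PS) S"
    using i t by (intro measurable_compose[OF measurable_snd measurable_component_singleton]) auto
  have W: "Wp i \<tau> \<in> borel_measurable (borel \<Otimes>\<^sub>M PS)" using Wp_meas i t by simp
  show ?thesis unfolding nsp_def
    using G_meas'[OF i W c] measurable_compose[OF W gfi_meas[OF i]] by auto
qed

lemma Wp_upd: "j \<noteq> i \<or> \<tau> \<le> s \<Longrightarrow> Wp i \<tau> (q, x((j, s) := y)) = Wp i \<tau> (q, x)"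
  unfolding Wp_def by (auto intro!: local_iter_cong)

lemma QX_meas: "(\<lambda>\<omega>. (Q \<omega>, Xi \<omega>)) \<in> measurable M (borel \<Otimes>\<^sub>M PS)"
  using Q_meas Xi_meas by (rule measurable_Pair)

lemma Pd_sf: "product_sigma_finite Pd"
  unfolding product_sigma_finite_def using Pd_prob prob_space_imp_sigma_finite by blast

lemma zero_mean:
  assumes i: "i \<in> {1..N}" and t: "\<tau> < K"
    and \<phi>m: "\<phi> \<in> borel_measurable (borel \<Otimes>\<^sub>M PS)"
    and \<phi>ind: "\<And>q x y. \<phi> (q, x((i, \<tau>) := y)) = \<phi> (q, x)"
    and int: "integrable M (\<lambda>\<omega>. \<phi> (Q \<omega>, Xi \<omega>) \<bullet> nsp i \<tau> (Q \<omega>, Xi \<omega>))"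
  shows "(\<integral>\<omega>. \<phi> (Q \<omega>, Xi \<omega>) \<bullet> nsp i \<tau> (Q \<omega>, Xi \<omega>) \<partial>M) = 0"
proof -
  define F where "F = (\<lambda>z. \<phi> z \<bullet> nsp i \<tau> z)"
  have Fm: "F \<in> borel_measurable (borel \<Otimes>\<^sub>M PS)"
    unfolding F_def using \<phi>m nsp_meas[OF i t] by auto
  let ?\<mu> = "distr M borel Q" and ?\<nu> = "\<Pi>\<^sub>M j\<in>I. Pd j"
  interpret p1: prob_space ?\<mu> by (rule prob_space_distr) (rule Q_meas)
  interpret PD: product_sigma_finite Pd by (rule Pd_sf)
  interpret p2: prob_space ?\<nu> by (rule prob_space_PiM) (auto simp: Pd_prob)
  interpret pp: pair_sigma_finite ?\<mu> ?\<nu> by unfold_locales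
  have eq1: "(\<integral>\<omega>. F (Q \<omega>, Xi \<omega>) \<partial>M) = integral\<^sup>L (?\<mu> \<Otimes>\<^sub>M ?\<nu>) F"
    unfolding distr_eq by (rule integral_distr[symmetric, OF QX_meas Fm])
  have intP: "integrable (?\<mu> \<Otimes>\<^sub>M ?\<nu>) F"
    unfolding distr_eq using int by (subst integrable_distr_eq[OF QX_meas Fm]) (simp add: F_def)
  have eq2: "integral\<^sup>L (?\<mu> \<Otimes>\<^sub>M ?\<nu>) F = (\<integral>q. (\<integral>x. F (q, x) \<partial>?\<nu>) \<partial>?\<mu>)"
    by (rule pp.integral_fst'[OF intP, symmetric])
  define k where "k = (i, \<tau>)"
  have kI: "k \<in> I" using i t by (simp add: k_def)
  have ins: "insert k (I - {k}) = I" using kI by auto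
  have inner: "(\<integral>y. F (q, x(k := y)) \<partial>Pd k) = 0" for q x
  proof -
    define w where "w = Wp i \<tau> (q, x)"
    define c where "c = \<phi> (q, x)"
    have "F (q, x(k := y)) = c \<bullet> (G i w y - gfi i w)" for y
      unfolding F_def nsp_def k_def c_def w_def using \<phi>ind Wp_upd by simp
    then have "(\<integral>y. F (q, x(k := y)) \<partial>Pd k) = (\<integral>y. c \<bullet> (G i w y - gfi i w) \<partial>Pd k)" by simp
    also have Gm: "G i w \<in> borel_measurable S"
      using G_meas'[OF i, of "\<lambda>_. w" S "\<lambda>y. y"] by simp
    have Gint: "integrable (Pd k) (G i w)"
      unfolding Pd_def k_def using A2_int[OF i t, of w] Gm
      by (subst integrable_distr_eq) (auto simp: xi_meas)
    have GI: "(\<integral>y. G i w y \<partial>Pd k) = gfi i w"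
      unfolding Pd_def k_def using A2_unbiased[OF i t, of w] Gm
      by (subst integral_distr) (auto simp: xi_meas)
    interpret pk: prob_space "Pd k" by (rule Pd_prob)
    have z: "(\<integral>y. (G i w y - gfi i w) \<partial>Pd k) = 0"
      using Gint GI by (subst Bochner_Integration.integral_diff[OF Gint]) (auto simp: pk.prob_space)
    have "(\<integral>y. c \<bullet> (G i w y - gfi i w) \<partial>Pd k) = c \<bullet> (\<integral>y. (G i w y - gfi i w) \<partial>Pd k)"
      using Gint by (intro integral_inner_right) auto
    also have "\<dots> = 0" by (simp add: z)
    finally show ?thesis .
  qed
  have "AE q in ?\<mu>. (\<integral>x. F (q, x) \<partial>?\<nu>) = 0"
    using pp.AE_integrable_fst'[OF intP]
  proof eventually_elim
    case (elim q)
    have "(\<integral>x. F (q, x) \<partial>?\<nu>) = (\<integral>x. F (q, x) \<partial>(\<Pi>\<^sub>M j\<in>insert k (I - {k}). Pd j))"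
      by (simp only: ins)
    also have "\<dots> = (\<integral>x. (\<integral>y. F (q, x(k := y)) \<partial>Pd k) \<partial>(\<Pi>\<^sub>M j\<in>I - {k}. Pd j))"
      using elim by (intro PD.product_integral_insert) (simp_all only: ins, auto)
    also have "\<dots> = 0" by (simp add: inner)
    finally show ?case .
  qed
  then have "(\<integral>q. (\<integral>x. F (q, x) \<partial>?\<nu>) \<partial>?\<mu>) = (\<integral>q. 0 \<partial>?\<mu>)"
    using borel_measurable_integrable[OF pp.integrable_fst'[OF intP]]
    by (intro integral_cong_AE) auto
  then show ?thesis using eq1 eq2 by (simp add: F_def)
qed

lemma sets_Pd: "sets (PiM J Pd) = sets (PiM J (\<lambda>_. S))"
  by (intro sets_PiM_cong) (auto simp: Pd_def)

lemma var_nn: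
  assumes i: "i \<in> {1..N}" and t: "\<tau> < K"
  shows "(\<integral>\<^sup>+\<omega>. ennreal ((norm (nsp i \<tau> (Q \<omega>, Xi \<omega>)))\<^sup>2) \<partial>M) \<le> ennreal (\<sigma>l\<^sup>2)"
proof -
  define H where "H = (\<lambda>z. ennreal ((norm (nsp i \<tau> z))\<^sup>2))"
  have Hm: "H \<in> borel_measurable (borel \<Otimes>\<^sub>M PS)"
    unfolding H_def using nsp_meas[OF i t] by measurable
  let ?\<mu> = "distr M borel Q" and ?\<nu> = "\<Pi>\<^sub>M j\<in>I. Pd j"
  interpret p1: prob_space ?\<mu> by (rule prob_space_distr) (rule Q_meas)
  interpret PD: product_sigma_finite Pd by (rule Pd_sf)
  interpret p2: prob_space ?\<nu> by (rule prob_space_PiM) (auto simp: Pd_prob)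
  interpret pp: pair_sigma_finite ?\<mu> ?\<nu> by unfold_locales
  have Hm': "H \<in> borel_measurable (?\<mu> \<Otimes>\<^sub>M ?\<nu>)"
    unfolding distr_eq using Hm by simp
  have eq1: "(\<integral>\<^sup>+\<omega>. H (Q \<omega>, Xi \<omega>) \<partial>M) = integral\<^sup>N (?\<mu> \<Otimes>\<^sub>M ?\<nu>) H"
    unfolding distr_eq using Hm by (intro nn_integral_distr[symmetric, OF QX_meas]) simp
  also have "\<dots> = (\<integral>\<^sup>+q. (\<integral>\<^sup>+x. H (q, x) \<partial>?\<nu>) \<partial>?\<mu>)"
    by (rule p2.nn_integral_fst[OF Hm', symmetric])
  also have "\<dots> \<le> (\<integral>\<^sup>+q. ennreal (\<sigma>l\<^sup>2) \<partial>?\<mu>)"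
  proof (rule nn_integral_mono)
    fix q
    define k where "k = (i, \<tau>)"
    have kI: "k \<in> I" using i t by (simp add: k_def)
    have ins: "insert k (I - {k}) = I" using kI by auto
    have Hq: "(\<lambda>x. H (q, x)) \<in> borel_measurable (\<Pi>\<^sub>M j\<in>insert k (I - {k}). Pd j)"
      using measurable_Pair2[OF Hm, of q] unfolding ins by (simp add: measurable_cong_sets[OF sets_Pd refl])
    have inner: "(\<integral>\<^sup>+y. H (q, x(k := y)) \<partial>Pd k) \<le> ennreal (\<sigma>l\<^sup>2)" for x
    proof -
      define w where "w = Wp i \<tau> (q, x)"
      have "H (q, x(k := y)) = ennreal ((norm (G i w y - gfi i w))\<^sup>2)" for y
        unfolding H_def nsp_def k_def w_def using Wp_upd by simp
      then have "(\<integral>\<^sup>+y. H (q, x(k := y)) \<partial>Pd k) = (\<integral>\<^sup>+y. ennreal ((norm (G i w y - gfi i w))\<^sup>2) \<partial>Pd k)"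
        by simp
      also have Gm: "G i w \<in> borel_measurable S"
        using G_meas'[OF i, of "\<lambda>_. w" S "\<lambda>y. y"] by simp
      have "(\<integral>\<^sup>+y. ennreal ((norm (G i w y - gfi i w))\<^sup>2) \<partial>Pd k)
           = (\<integral>\<^sup>+\<omega>. ennreal ((norm (G i w (\<xi> i \<tau> \<omega>) - gfi i w))\<^sup>2) \<partial>M)"
        unfolding Pd_def k_def using Gm by (subst nn_integral_distr) (auto simp: xi_meas)
      also have "\<dots> = ennreal (\<integral>\<omega>. (norm (G i w (\<xi> i \<tau> \<omega>) - gfi i w))\<^sup>2 \<partial>M)"
        using A2_var_int[OF i t, of w] by (intro nn_integral_eq_integral) auto
      also have "\<dots> \<le> ennreal (\<sigma>l\<^sup>2)"
        using A2_var[OF i t, of w] by (rule ennreal_leI)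
      finally show ?thesis .
    qed
    have "(\<integral>\<^sup>+x. H (q, x) \<partial>?\<nu>) = (\<integral>\<^sup>+x. H (q, x) \<partial>(\<Pi>\<^sub>M j\<in>insert k (I - {k}). Pd j))"
      by (simp only: ins)
    also have "\<dots> = (\<integral>\<^sup>+x. (\<integral>\<^sup>+y. H (q, x(k := y)) \<partial>Pd k) \<partial>(\<Pi>\<^sub>M j\<in>I - {k}. Pd j))"
      using Hq by (intro PD.product_nn_integral_insert) auto
    also have "\<dots> \<le> (\<integral>\<^sup>+x. ennreal (\<sigma>l\<^sup>2) \<partial>(\<Pi>\<^sub>M j\<in>I - {k}. Pd j))"
      by (intro nn_integral_mono inner)
    also have "\<dots> = ennreal (\<sigma>l\<^sup>2)"
    proof -
      interpret p3: prob_space "\<Pi>\<^sub>M j\<in>I - {k}. Pd j" by (rule prob_space_PiM) (auto simp: Pd_prob)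
      show ?thesis using p3.emeasure_space_1 by simp
    qed
    finally show "(\<integral>\<^sup>+x. H (q, x) \<partial>?\<nu>) \<le> ennreal (\<sigma>l\<^sup>2)" .
  qed
  also have "\<dots> = ennreal (\<sigma>l\<^sup>2)" using p1.emeasure_space_1 by simp
  finally show ?thesis by (simp add: H_def)
qed

lemma var_bound:
  assumes i: "i \<in> {1..N}" and t: "\<tau> < K"
  shows "integrable M (\<lambda>\<omega>. (norm (nsp i \<tau> (Q \<omega>, Xi \<omega>)))\<^sup>2)"
    and "(\<integral>\<omega>. (norm (nsp i \<tau> (Q \<omega>, Xi \<omega>)))\<^sup>2 \<partial>M) \<le> \<sigma>l\<^sup>2"
proof -
  have m: "(\<lambda>\<omega>. (norm (nsp i \<tau> (Q \<omega>, Xi \<omega>)))\<^sup>2) \<in> borel_measurable M"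
    using measurable_compose[OF QX_meas nsp_meas[OF i t]] by measurable
  show "integrable M (\<lambda>\<omega>. (norm (nsp i \<tau> (Q \<omega>, Xi \<omega>)))\<^sup>2)"
    using var_nn[OF i t] m by (intro integrableI_nonneg) (auto simp: top.not_eq_extremum intro: le_less_trans)
  show "(\<integral>\<omega>. (norm (nsp i \<tau> (Q \<omega>, Xi \<omega>)))\<^sup>2 \<partial>M) \<le> \<sigma>l\<^sup>2"
    using var_nn[OF i t] m by (subst integral_eq_nn_integral) (auto simp: enn2real_leI)
qed

end


locale LS2 = LS M S N K \<eta> \<sigma>l L G gfi Q \<xi>
  for M :: "'w measure" and S :: "'n measure"
    and N K :: nat and \<eta> \<sigma>l L :: real
    and G :: "nat \<Rightarrow> ('d::finite, 'k::finite) mat \<Rightarrow> 'n \<Rightarrow> ('d, 'k) mat"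
    and gfi :: "nat \<Rightarrow> ('d, 'k) mat \<Rightarrow> ('d, 'k) mat"
    and Q :: "'w \<Rightarrow> ('d, 'k) mat"
    and \<xi> :: "nat \<Rightarrow> nat \<Rightarrow> 'w \<Rightarrow> 'n" +
  fixes C \<sigma>g :: real
    and p :: "nat \<Rightarrow> real"
    and f :: "('d, 'k) mat \<Rightarrow> real" and gf :: "('d, 'k) mat \<Rightarrow> ('d, 'k) mat"
    and fi :: "nat \<Rightarrow> ('d, 'k) mat \<Rightarrow> real"
  assumes p_nonneg: "\<And>i. i \<in> {1..N} \<Longrightarrow> p i \<ge> 0"
    and p_sum: "(\<Sum>i\<in>{1..N}. p i) = 1"
    and f_def: "\<And>W. f W = (\<Sum>i\<in>{1..N}. p i * fi i W)"
    and f_grad: "\<And>W. (f has_derivative (\<lambda>H. gf W \<bullet> H)) (at W)"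
    and fi_grad: "\<And>i W. i \<in> {1..N} \<Longrightarrow> (fi i has_derivative (\<lambda>H. gfi i W \<bullet> H)) (at W)"
    and A1_f: "\<And>W W'. norm (gf W - gf W') \<le> L * norm (W - W')"
    and A1_sample: "\<And>i x W W'. i \<in> {1..N} \<Longrightarrow> x \<in> space S \<Longrightarrow>
                      norm (G i W x - G i W' x) \<le> L * norm (W - W')"
    and A3: "\<And>i W. i \<in> {1..N} \<Longrightarrow> (norm (gf W - gfi i W))\<^sup>2 \<le> \<sigma>g\<^sup>2"
    and fQ_int: "integrable M (\<lambda>\<omega>. f (Q \<omega>))"
    and gQ_int: "integrable M (\<lambda>\<omega>. (norm (gf (Q \<omega>)))\<^sup>2)"
    and eta_pos: "\<eta> > 0"
    and cond1: "1/2 - 9 * L\<^sup>2 * \<eta>\<^sup>2 * (real K)\<^sup>2 * real N * (\<Sum>i\<in>{1..N}. (p i)\<^sup>2) \<ge> C"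
begin

lemma L_nonneg: "L \<ge> 0"
proof -
  obtain b :: "('d, 'k) mat" where b: "b \<in> Basis" using nonempty_Basis by blast
  then have "b \<noteq> 0" by (rule nonzero_Basis)
  then have "norm b > 0" by simp
  moreover have "0 \<le> L * norm b" using A1_f[of b 0] norm_ge_zero[of "gf b - gf 0"] by (simp del: norm_ge_zero)
  ultimately show ?thesis using zero_le_mult_iff[of L "norm b"] by linarith
qed

lemma gf_sum: "gf W = (\<Sum>i\<in>{1..N}. p i *\<^sub>R gfi i W)"
proof -
  have d1: "(f has_derivative (\<lambda>H. (\<Sum>i\<in>{1..N}. p i *\<^sub>R gfi i W) \<bullet> H)) (at W)"
  proof -
    have "((\<lambda>W. \<Sum>i\<in>{1..N}. p i * fi i W) has_derivative (\<lambda>H. \<Sum>i\<in>{1..N}. p i * (gfi i W \<bullet> H))) (at W)"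
      by (intro has_derivative_sum has_derivative_mult_right fi_grad) auto
    moreover have "(\<lambda>H. \<Sum>i\<in>{1..N}. p i * (gfi i W \<bullet> H)) = (\<lambda>H. (\<Sum>i\<in>{1..N}. p i *\<^sub>R gfi i W) \<bullet> H)"
      by (auto simp: fun_eq_iff inner_sum_left)
    moreover have "f = (\<lambda>W. \<Sum>i\<in>{1..N}. p i * fi i W)" by (auto simp: fun_eq_iff f_def)
    ultimately show ?thesis by simp
  qed
  define s where "s = (\<Sum>i\<in>{1..N}. p i *\<^sub>R gfi i W)"
  have "(\<lambda>H. gf W \<bullet> H) = (\<lambda>H. s \<bullet> H)"
    unfolding s_def by (rule has_derivative_unique[OF f_grad d1])
  then have "gf W \<bullet> (gf W - s) = s \<bullet> (gf W - s)" by (rule fun_cong)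
  then have "(gf W - s) \<bullet> (gf W - s) = 0" by (simp only: inner_diff_left)
  then show ?thesis by (simp add: s_def)
qed

lemma gf_meas: "gf \<in> borel_measurable borel"
proof -
  have "(max L 0)-lipschitz_on UNIV gf"
  proof (rule lipschitz_onI)
    fix x y :: "('d, 'k) mat"
    have "dist (gf x) (gf y) \<le> L * dist x y" using A1_f by (simp add: dist_norm)
    also have "\<dots> \<le> max L 0 * dist x y" by (intro mult_right_mono) auto
    finally show "dist (gf x) (gf y) \<le> max L 0 * dist x y" .
  qed auto
  then show ?thesis by (intro borel_measurable_continuous_onI lipschitz_on_continuous_on)
qed

lemma f_meas: "f \<in> borel_measurable borel"
proof -
  have "continuous_on UNIV f"
    using f_grad has_derivative_continuous continuous_at_imp_continuous_on by blast
  then show ?thesis by (rule borel_measurable_continuous_onI)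
qed

definition "Wt i \<tau> \<omega> = Wp i \<tau> (Q \<omega>, Xi \<omega>)"
definition "nt i \<tau> \<omega> = nsp i \<tau> (Q \<omega>, Xi \<omega>)"
definition "ht i \<tau> \<omega> = gfi i (Wt i \<tau> \<omega>)"

lemma Wp_0: "Wp i 0 (q, x) = q"
  by (simp add: Wp_def)

lemma Wp_Suc: "Wp i (Suc \<tau>) (q, x) = Wp i \<tau> (q, x) - \<eta> *\<^sub>R G i (Wp i \<tau> (q, x)) (x (i, \<tau>))"
  by (simp add: Wp_def)

lemma Wp_unroll: "Wp i \<tau> (q, x) = q - \<eta> *\<^sub>R (\<Sum>s<\<tau>. G i (Wp i s (q, x)) (x (i, s)))"
proof (induction \<tau>)
  case 0
  then show ?case by (simp add: Wp_0)
next
  case (Suc \<tau>)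
  show ?case unfolding Wp_Suc Suc sum.lessThan_Suc scaleR_add_right by simp
qed

lemma Xi_app: "(i, \<tau>) \<in> I \<Longrightarrow> Xi \<omega> (i, \<tau>) = \<xi> i \<tau> \<omega>"
  by (simp add: Xi_def)

lemma G_eq: "i \<in> {1..N} \<Longrightarrow> \<tau> < K \<Longrightarrow> G i (Wt i \<tau> \<omega>) (\<xi> i \<tau> \<omega>) = ht i \<tau> \<omega> + nt i \<tau> \<omega>"
  by (simp add: nt_def ht_def nsp_def Wt_def Xi_app)

lemma Wt_unroll: "i \<in> {1..N} \<Longrightarrow> \<tau> \<le> K \<Longrightarrow>
   Wt i \<tau> \<omega> - Q \<omega> = - \<eta> *\<^sub>R (\<Sum>s<\<tau>. ht i s \<omega> + nt i s \<omega>)"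
proof -
  assume i: "i \<in> {1..N}" and t: "\<tau> \<le> K"
  have "(\<Sum>s<\<tau>. G i (Wp i s (Q \<omega>, Xi \<omega>)) (Xi \<omega> (i, s))) = (\<Sum>s<\<tau>. ht i s \<omega> + nt i s \<omega>)"
  proof (rule sum.cong[OF refl])
    fix s assume "s \<in> {..<\<tau>}"
    then have s: "s < K" using t by simp
    show "G i (Wp i s (Q \<omega>, Xi \<omega>)) (Xi \<omega> (i, s)) = ht i s \<omega> + nt i s \<omega>"
      using G_eq[OF i s, of \<omega>] Xi_app[of i s \<omega>] i s by (simp add: Wt_def)
  qed
  then show ?thesis unfolding Wt_def Wp_unroll[of i \<tau> "Q \<omega>" "Xi \<omega>"] by simp
qed

lemma local_iter_Wt: "i \<in> {1..N} \<Longrightarrow> \<tau> \<le> K \<Longrightarrow>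
   local_iter G \<eta> (\<lambda>i \<tau>. \<xi> i \<tau> \<omega>) (Q \<omega>) i \<tau> = Wt i \<tau> \<omega>"
proof -
  assume i: "i \<in> {1..N}" and t: "\<tau> \<le> K"
  have "local_iter G \<eta> (\<lambda>i \<tau>. \<xi> i \<tau> \<omega>) (Q \<omega>) i \<tau> = local_iter G \<eta> (\<lambda>a b. Xi \<omega> (a, b)) (Q \<omega>) i \<tau>"
  proof (rule local_iter_cong)
    fix s assume "s < \<tau>"
    then have "(i, s) \<in> I" using i t by simp
    then show "\<xi> i s \<omega> = Xi \<omega> (i, s)" by (simp add: Xi_app)
  qed
  then show ?thesis by (simp add: Wt_def Wp_def)
qed

definition "gsum \<omega> = (\<Sum>i\<in>{1..N}. p i *\<^sub>R (\<Sum>\<tau><K. ht i \<tau> \<omega> + nt i \<tau> \<omega>))"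

lemma V_eq: "V_next G p N K \<eta> (\<lambda>i \<tau>. \<xi> i \<tau> \<omega>) (Q \<omega>) = Q \<omega> - \<eta> *\<^sub>R gsum \<omega>"
proof -
  have "V_next G p N K \<eta> (\<lambda>i \<tau>. \<xi> i \<tau> \<omega>) (Q \<omega>) =
     (\<Sum>i\<in>{1..N}. p i *\<^sub>R (Q \<omega> - \<eta> *\<^sub>R (\<Sum>\<tau><K. ht i \<tau> \<omega> + nt i \<tau> \<omega>)))"
    unfolding V_next_def
  proof (intro sum.cong refl arg_cong2[where f="(*\<^sub>R)"] arg_cong2[where f="(-)"])
    fix i \<tau> assume i: "i \<in> {1..N}" and t: "\<tau> \<in> {..<K}"
    then show "G i (local_iter G \<eta> (\<lambda>i \<tau>. \<xi> i \<tau> \<omega>) (Q \<omega>) i \<tau>) (\<xi> i \<tau> \<omega>) = ht i \<tau> \<omega> + nt i \<tau> \<omega>"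
      using local_iter_Wt[OF i, of \<tau> \<omega>] G_eq[OF i, of \<tau> \<omega>] by simp
  qed
  also have "\<dots> = (\<Sum>i\<in>{1..N}. p i) *\<^sub>R Q \<omega> - \<eta> *\<^sub>R gsum \<omega>"
    by (simp add: gsum_def scaleR_diff_right sum_subtractf scaleR_sum_left scaleR_sum_right mult.commute)
  finally show ?thesis using p_sum by simp
qed

end


context LS2
begin

lemma Wt_meas: "i \<in> {1..N} \<Longrightarrow> \<tau> \<le> K \<Longrightarrow> Wt i \<tau> \<in> borel_measurable M"
  unfolding Wt_def using measurable_compose[OF QX_meas Wp_meas] by simp

lemma nt_meas: "i \<in> {1..N} \<Longrightarrow> \<tau> < K \<Longrightarrow> nt i \<tau> \<in> borel_measurable M"
  unfolding nt_def using measurable_compose[OF QX_meas nsp_meas] by simp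

lemma ht_meas: "i \<in> {1..N} \<Longrightarrow> \<tau> \<le> K \<Longrightarrow> ht i \<tau> \<in> borel_measurable M"
  unfolding ht_def using measurable_compose[OF Wt_meas gfi_meas] by simp

lemma a_meas: "(\<lambda>\<omega>. gf (Q \<omega>)) \<in> borel_measurable M"
  using measurable_compose[OF Q_meas gf_meas] by simp

lemma sqi_a: "sqi M (\<lambda>\<omega>. gf (Q \<omega>))"
  unfolding sqi_def using a_meas gQ_int by simp

lemma sqi_nt: "i \<in> {1..N} \<Longrightarrow> \<tau> < K \<Longrightarrow> sqi M (nt i \<tau>)"
  unfolding sqi_def using nt_meas var_bound(1) by (simp add: nt_def)

lemma sg_bound: "i \<in> {1..N} \<Longrightarrow> norm (gf W - gfi i W) \<le> \<bar>\<sigma>g\<bar>"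
  using A3[of i W] abs_le_square_iff[of "norm (gf W - gfi i W)" \<sigma>g] by simp

lemma ht_bound: "i \<in> {1..N} \<Longrightarrow>
  norm (ht i \<tau> \<omega>) \<le> L * norm (Wt i \<tau> \<omega> - Q \<omega>) + \<bar>\<sigma>g\<bar> + norm (gf (Q \<omega>))"
proof -
  assume i: "i \<in> {1..N}"
  have "ht i \<tau> \<omega> = (gfi i (Wt i \<tau> \<omega>) - gfi i (Q \<omega>)) + (gfi i (Q \<omega>) - gf (Q \<omega>)) + gf (Q \<omega>)"
    by (simp add: ht_def)
  also have "norm \<dots> \<le> norm (gfi i (Wt i \<tau> \<omega>) - gfi i (Q \<omega>)) + norm (gfi i (Q \<omega>) - gf (Q \<omega>)) + norm (gf (Q \<omega>))"
    by (intro order_trans[OF norm_triangle_ineq] add_mono) auto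
  also have "\<dots> \<le> L * norm (Wt i \<tau> \<omega> - Q \<omega>) + \<bar>\<sigma>g\<bar> + norm (gf (Q \<omega>))"
    using A1_fi[OF i, of "Wt i \<tau> \<omega>" "Q \<omega>"] sg_bound[OF i, of "Q \<omega>"]
    by (simp add: norm_minus_commute)
  finally show ?thesis .
qed

lemma sqi_ht:
  assumes i: "i \<in> {1..N}" and t: "\<tau> \<le> K" and W: "sqi M (\<lambda>\<omega>. Wt i \<tau> \<omega> - Q \<omega>)"
  shows "sqi M (ht i \<tau>)"
proof -
  have r: "sqi M (\<lambda>\<omega>. L * norm (Wt i \<tau> \<omega> - Q \<omega>) + \<bar>\<sigma>g\<bar> + norm (gf (Q \<omega>)))"
    using sqi_add[OF sqi_add[OF sqi_scaleR[OF sqi_norm[OF W], of L] sqi_const[of "\<bar>\<sigma>g\<bar>"]] sqi_norm[OF sqi_a]]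
    by simp
  show ?thesis
  proof (rule sqi_le[OF ht_meas[OF i t] r])
    fix \<omega>
    have "0 \<le> L * norm (Wt i \<tau> \<omega> - Q \<omega>) + \<bar>\<sigma>g\<bar> + norm (gf (Q \<omega>))"
      using L_nonneg by simp
    then show "norm (ht i \<tau> \<omega>) \<le> norm (L * norm (Wt i \<tau> \<omega> - Q \<omega>) + \<bar>\<sigma>g\<bar> + norm (gf (Q \<omega>)))"
      using ht_bound[OF i, of \<tau> \<omega>] by simp
  qed
qed

lemma Wt_step: "i \<in> {1..N} \<Longrightarrow> Suc \<tau> \<le> K \<Longrightarrow>
  Wt i (Suc \<tau>) \<omega> - Q \<omega> = (Wt i \<tau> \<omega> - Q \<omega>) - \<eta> *\<^sub>R (ht i \<tau> \<omega> + nt i \<tau> \<omega>)"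
  using Wt_unroll[of i "Suc \<tau>" \<omega>] Wt_unroll[of i \<tau> \<omega>] by (simp add: scaleR_add_right)

lemma sqi_W: "i \<in> {1..N} \<Longrightarrow> \<tau> \<le> K \<Longrightarrow> sqi M (\<lambda>\<omega>. Wt i \<tau> \<omega> - Q \<omega>)"
proof (induction \<tau>)
  case 0
  have "Wt i 0 \<omega> - Q \<omega> = 0" for \<omega> using Wt_unroll[OF 0(1), of 0 \<omega>] by simp
  then show ?case using sqi_const[of 0] by simp
next
  case (Suc \<tau>)
  then have i: "i \<in> {1..N}" and t: "\<tau> < K" by auto
  have W: "sqi M (\<lambda>\<omega>. Wt i \<tau> \<omega> - Q \<omega>)" using Suc by simp
  have "sqi M (\<lambda>\<omega>. (Wt i \<tau> \<omega> - Q \<omega>) - \<eta> *\<^sub>R (ht i \<tau> \<omega> + nt i \<tau> \<omega>))"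
    using sqi_diff[OF W sqi_scaleR[OF sqi_add[OF sqi_ht[OF i _ W] sqi_nt[OF i t]]]] t by simp
  moreover have "(\<lambda>\<omega>. Wt i (Suc \<tau>) \<omega> - Q \<omega>) = (\<lambda>\<omega>. (Wt i \<tau> \<omega> - Q \<omega>) - \<eta> *\<^sub>R (ht i \<tau> \<omega> + nt i \<tau> \<omega>))"
    using Wt_step[OF i Suc.prems(2)] by (rule ext)
  ultimately show ?case by simp
qed

lemma sqi_ht': "i \<in> {1..N} \<Longrightarrow> \<tau> \<le> K \<Longrightarrow> sqi M (ht i \<tau>)"
  using sqi_ht sqi_W by blast

end


lemma key_alg:
  fixes a d n :: "'v::real_inner"
  assumes eta: "0 < \<eta>" and k: "0 < k" and L: "0 \<le> L" and Lk: "L * \<eta> * k \<le> 1"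
    and c: "(d = 0 \<and> c = 1/2) \<or> c = 1"
  shows "a \<bullet> (- \<eta> *\<^sub>R (k *\<^sub>R a + d + n)) + L / 2 * (norm (\<eta> *\<^sub>R (k *\<^sub>R a + d + n)))\<^sup>2
     \<le> - \<eta> * k / 2 * (norm a)\<^sup>2 + \<eta> / k * (norm d)\<^sup>2 + (L * k * \<eta>\<^sup>2 - \<eta>) * (a \<bullet> n) + L * \<eta>\<^sup>2 * c * (norm n)\<^sup>2"
proof -
  define m where "m = k *\<^sub>R a + d"
  have e1: "a \<bullet> (- \<eta> *\<^sub>R (k *\<^sub>R a + d + n)) = - \<eta> * (a \<bullet> m) - \<eta> * (a \<bullet> n)"
    by (simp add: m_def inner_add_right algebra_simps)
  have mn: "(norm (m + n))\<^sup>2 = (norm m)\<^sup>2 + 2 * (m \<bullet> n) + (norm n)\<^sup>2"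
    unfolding power2_norm_eq_inner by (simp add: inner_add_left inner_add_right inner_commute)
  have e2: "(norm (\<eta> *\<^sub>R (k *\<^sub>R a + d + n)))\<^sup>2 = \<eta>\<^sup>2 * ((norm m)\<^sup>2 + 2 * (m \<bullet> n) + (norm n)\<^sup>2)"
  proof -
    have "k *\<^sub>R a + d + n = m + n" by (simp add: m_def)
    then have "(norm (\<eta> *\<^sub>R (k *\<^sub>R a + d + n)))\<^sup>2 = \<eta>\<^sup>2 * (norm (m + n))\<^sup>2"
      by (simp add: power_mult_distrib)
    then show ?thesis by (simp add: mn)
  qed
  have e3: "(norm m)\<^sup>2 = k\<^sup>2 * (norm a)\<^sup>2 + 2 * k * (a \<bullet> d) + (norm d)\<^sup>2"
    unfolding m_def power2_norm_eq_inner by (simp add: inner_add_left inner_add_right inner_commute power2_eq_square algebra_simps)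
  have e4: "a \<bullet> m = k * (norm a)\<^sup>2 + a \<bullet> d"
    by (simp add: m_def inner_add_right power2_norm_eq_inner)
  have e5: "m \<bullet> n = k * (a \<bullet> n) + d \<bullet> n"
    by (simp add: m_def inner_add_left)
  have f1: "L * \<eta>\<^sup>2 / 2 * (norm m)\<^sup>2 \<le> \<eta> / (2 * k) * (norm m)\<^sup>2"
  proof (rule mult_right_mono)
    have "L * \<eta>\<^sup>2 / 2 = (L * \<eta> * k) * (\<eta> / (2 * k))" using k by (simp add: field_simps power2_eq_square)
    also have "\<dots> \<le> 1 * (\<eta> / (2 * k))" using Lk eta k by (intro mult_right_mono) auto
    finally show "L * \<eta>\<^sup>2 / 2 \<le> \<eta> / (2 * k)" by simp
  qed simp
  have f2: "- \<eta> * (a \<bullet> m) + \<eta> / (2 * k) * (norm m)\<^sup>2 = - \<eta> * k / 2 * (norm a)\<^sup>2 + \<eta> / (2 * k) * (norm d)\<^sup>2"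
    unfolding e3 e4 using k by (simp add: field_simps power2_eq_square)
  have f3: "L * \<eta>\<^sup>2 * (d \<bullet> n) \<le> L * \<eta>\<^sup>2 / 2 * (norm d)\<^sup>2 + L * \<eta>\<^sup>2 / 2 * (norm n)\<^sup>2"
  proof -
    have "0 \<le> (norm (d - n))\<^sup>2" by simp
    then have "2 * (d \<bullet> n) \<le> (norm d)\<^sup>2 + (norm n)\<^sup>2"
      by (simp add: power2_norm_eq_inner inner_diff_left inner_diff_right inner_commute)
    then have "L * \<eta>\<^sup>2 * (2 * (d \<bullet> n)) \<le> L * \<eta>\<^sup>2 * ((norm d)\<^sup>2 + (norm n)\<^sup>2)"
      using L by (intro mult_left_mono) auto
    then show ?thesis by (simp add: algebra_simps)
  qed
  have f4: "L * \<eta>\<^sup>2 / 2 * (norm d)\<^sup>2 \<le> \<eta> / (2 * k) * (norm d)\<^sup>2"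
  proof (rule mult_right_mono)
    have "L * \<eta>\<^sup>2 / 2 = (L * \<eta> * k) * (\<eta> / (2 * k))" using k by (simp add: field_simps power2_eq_square)
    also have "\<dots> \<le> 1 * (\<eta> / (2 * k))" using Lk eta k by (intro mult_right_mono) auto
    finally show "L * \<eta>\<^sup>2 / 2 \<le> \<eta> / (2 * k)" by simp
  qed simp
  have lhs: "a \<bullet> (- \<eta> *\<^sub>R (k *\<^sub>R a + d + n)) + L / 2 * (norm (\<eta> *\<^sub>R (k *\<^sub>R a + d + n)))\<^sup>2
     = - \<eta> * (a \<bullet> m) - \<eta> * (a \<bullet> n) + L * \<eta>\<^sup>2 / 2 * (norm m)\<^sup>2 + L * \<eta>\<^sup>2 * k * (a \<bullet> n)
       + L * \<eta>\<^sup>2 * (d \<bullet> n) + L * \<eta>\<^sup>2 / 2 * (norm n)\<^sup>2"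
    unfolding e1 e2 e5 by (simp add: algebra_simps)
  have rhs: "(L * k * \<eta>\<^sup>2 - \<eta>) * (a \<bullet> n) = L * \<eta>\<^sup>2 * k * (a \<bullet> n) - \<eta> * (a \<bullet> n)"
    by (simp add: algebra_simps)
  have "\<eta> / (2 * k) * (norm d)\<^sup>2 + \<eta> / (2 * k) * (norm d)\<^sup>2 = \<eta> / k * (norm d)\<^sup>2"
    by (simp add: field_simps)
  moreover have "0 \<le> \<eta> / k * (norm d)\<^sup>2" using eta k by simp
  moreover have "0 \<le> L * \<eta>\<^sup>2 / 2 * (norm n)\<^sup>2" using L by simp
  note facts = this
  from c show ?thesis
  proof
    assume h: "d = 0 \<and> c = 1/2"
    then have h1: "L * \<eta>\<^sup>2 * c * (norm n)\<^sup>2 = L * \<eta>\<^sup>2 / 2 * (norm n)\<^sup>2" and h2: "L * \<eta>\<^sup>2 * (d \<bullet> n) = 0"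
      and h3: "\<eta> / (2 * k) * (norm d)\<^sup>2 = 0" by simp_all
    show ?thesis unfolding lhs rhs h1 using f1 f2 h2 h3 by linarith
  next
    assume "c = 1"
    then have h1: "L * \<eta>\<^sup>2 * c * (norm n)\<^sup>2 = L * \<eta>\<^sup>2 / 2 * (norm n)\<^sup>2 + L * \<eta>\<^sup>2 / 2 * (norm n)\<^sup>2" by simp
    show ?thesis unfolding lhs rhs h1 using f1 f2 f3 f4 facts by linarith
  qed
qed


lemma sum_id_le: "(\<Sum>\<tau><K. real \<tau>) \<le> (real K)\<^sup>2 / 2"
proof (induction K)
  case (Suc K)
  then show ?case by (simp add: power2_eq_square field_simps)
qed simp

lemma rec_bound:
  fixes D :: "nat \<Rightarrow> real"
  assumes D0: "\<And>\<tau>. \<tau> < K \<Longrightarrow> 0 \<le> D \<tau>"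
    and rec: "\<And>\<tau>. \<tau> < K \<Longrightarrow> D \<tau> \<le> 2 * \<eta>\<^sup>2 * real \<tau> * \<sigma> + 2 * \<eta>\<^sup>2 * real \<tau> * (\<Sum>s<\<tau>. 3 * L\<^sup>2 * D s + B)"
    and \<sigma>: "0 \<le> \<sigma>" and B: "0 \<le> B" and small: "6 * \<eta>\<^sup>2 * L\<^sup>2 * (real K)\<^sup>2 \<le> 1/3"
  shows "(\<Sum>\<tau><K. D \<tau>) \<le> 3/2 * \<eta>\<^sup>2 * (real K)\<^sup>2 * \<sigma> + 3 * \<eta>\<^sup>2 * (real K)^3 * B"
proof -
  define T where "T = (\<Sum>\<tau><K. D \<tau>)"
  have T0: "0 \<le> T" unfolding T_def using D0 by (intro sum_nonneg) auto
  have step: "D \<tau> \<le> 2 * \<eta>\<^sup>2 * \<sigma> * real \<tau> + (6 * \<eta>\<^sup>2 * L\<^sup>2 * real K * T + 2 * \<eta>\<^sup>2 * (real K)\<^sup>2 * B)"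
    if t: "\<tau> < K" for \<tau>
  proof -
    have "(\<Sum>s<\<tau>. 3 * L\<^sup>2 * D s + B) = 3 * L\<^sup>2 * (\<Sum>s<\<tau>. D s) + real \<tau> * B"
      by (simp add: sum.distrib sum_distrib_left)
    also have "(\<Sum>s<\<tau>. D s) \<le> T"
      unfolding T_def using t D0 by (intro sum_mono2) auto
    then have "3 * L\<^sup>2 * (\<Sum>s<\<tau>. D s) + real \<tau> * B \<le> 3 * L\<^sup>2 * T + real K * B"
      using t B by (intro add_mono mult_left_mono mult_right_mono) auto
    finally have s1: "(\<Sum>s<\<tau>. 3 * L\<^sup>2 * D s + B) \<le> 3 * L\<^sup>2 * T + real K * B" .
    have "2 * \<eta>\<^sup>2 * real \<tau> * (\<Sum>s<\<tau>. 3 * L\<^sup>2 * D s + B) \<le> 2 * \<eta>\<^sup>2 * real \<tau> * (3 * L\<^sup>2 * T + real K * B)"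
      using s1 by (intro mult_left_mono) auto
    also have "\<dots> \<le> 2 * \<eta>\<^sup>2 * real K * (3 * L\<^sup>2 * T + real K * B)"
      using t T0 B by (intro mult_left_mono mult_right_mono) auto
    also have "\<dots> = 6 * \<eta>\<^sup>2 * L\<^sup>2 * real K * T + 2 * \<eta>\<^sup>2 * (real K)\<^sup>2 * B"
      by (simp add: algebra_simps power2_eq_square)
    finally show ?thesis using rec[OF t] by (simp add: algebra_simps)
  qed
  have "(\<Sum>\<tau><K. D \<tau>) \<le> (\<Sum>\<tau><K. 2 * \<eta>\<^sup>2 * \<sigma> * real \<tau> + (6 * \<eta>\<^sup>2 * L\<^sup>2 * real K * T + 2 * \<eta>\<^sup>2 * (real K)\<^sup>2 * B))"
    by (rule sum_mono) (rule step, simp)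
  then have "T \<le> (\<Sum>\<tau><K. 2 * \<eta>\<^sup>2 * \<sigma> * real \<tau> + (6 * \<eta>\<^sup>2 * L\<^sup>2 * real K * T + 2 * \<eta>\<^sup>2 * (real K)\<^sup>2 * B))"
    by (simp only: T_def[symmetric])
  also have "\<dots> = 2 * \<eta>\<^sup>2 * \<sigma> * (\<Sum>\<tau><K. real \<tau>) + real K * (6 * \<eta>\<^sup>2 * L\<^sup>2 * real K * T + 2 * \<eta>\<^sup>2 * (real K)\<^sup>2 * B)"
    by (simp add: sum.distrib sum_distrib_left)
  also have "\<dots> \<le> 2 * \<eta>\<^sup>2 * \<sigma> * ((real K)\<^sup>2 / 2) + real K * (6 * \<eta>\<^sup>2 * L\<^sup>2 * real K * T + 2 * \<eta>\<^sup>2 * (real K)\<^sup>2 * B)"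
    using sum_id_le[of K] \<sigma> by (intro add_mono mult_left_mono) auto
  also have "\<dots> = \<eta>\<^sup>2 * (real K)\<^sup>2 * \<sigma> + (6 * \<eta>\<^sup>2 * L\<^sup>2 * (real K)\<^sup>2) * T + 2 * \<eta>\<^sup>2 * (real K)^3 * B"
    by (simp add: algebra_simps power2_eq_square power3_eq_cube)
  finally have "T \<le> \<eta>\<^sup>2 * (real K)\<^sup>2 * \<sigma> + (6 * \<eta>\<^sup>2 * L\<^sup>2 * (real K)\<^sup>2) * T + 2 * \<eta>\<^sup>2 * (real K)^3 * B" .
  moreover have "(6 * \<eta>\<^sup>2 * L\<^sup>2 * (real K)\<^sup>2) * T \<le> 1/3 * T"
    using small T0 by (intro mult_right_mono) auto
  ultimately have "2/3 * T \<le> \<eta>\<^sup>2 * (real K)\<^sup>2 * \<sigma> + 2 * \<eta>\<^sup>2 * (real K)^3 * B" by linarith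
  then show ?thesis unfolding T_def[symmetric] by linarith
qed


context LS2
begin

lemma E_a_nt: "i \<in> {1..N} \<Longrightarrow> \<tau> < K \<Longrightarrow> (\<integral>\<omega>. gf (Q \<omega>) \<bullet> nt i \<tau> \<omega> \<partial>M) = 0"
proof -
  assume i: "i \<in> {1..N}" and t: "\<tau> < K"
  have "(\<integral>\<omega>. (\<lambda>z. gf (fst z)) (Q \<omega>, Xi \<omega>) \<bullet> nsp i \<tau> (Q \<omega>, Xi \<omega>) \<partial>M) = 0"
  proof (rule zero_mean[OF i t])
    show "(\<lambda>z. gf (fst z)) \<in> borel_measurable (borel \<Otimes>\<^sub>M PS)"
      using measurable_compose[OF measurable_fst gf_meas] by simp
    show "integrable M (\<lambda>\<omega>. (\<lambda>z. gf (fst z)) (Q \<omega>, Xi \<omega>) \<bullet> nsp i \<tau> (Q \<omega>, Xi \<omega>))"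
      using sqi_inner[OF sqi_a sqi_nt[OF i t]] by (simp add: nt_def)
  qed simp
  then show ?thesis by (simp add: nt_def)
qed

lemma E_nt_nt1:
  assumes i: "i \<in> {1..N}" and t: "\<tau> < K" and j: "j \<in> {1..N}" and s: "\<sigma> < K"
    and ne: "j \<noteq> i \<or> \<sigma> < \<tau>"
  shows "(\<integral>\<omega>. nt j \<sigma> \<omega> \<bullet> nt i \<tau> \<omega> \<partial>M) = 0"
proof -
  have "(\<integral>\<omega>. nsp j \<sigma> (Q \<omega>, Xi \<omega>) \<bullet> nsp i \<tau> (Q \<omega>, Xi \<omega>) \<partial>M) = 0"
  proof (rule zero_mean[OF i t])
    show "nsp j \<sigma> \<in> borel_measurable (borel \<Otimes>\<^sub>M PS)" by (rule nsp_meas[OF j s])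
    show "integrable M (\<lambda>\<omega>. nsp j \<sigma> (Q \<omega>, Xi \<omega>) \<bullet> nsp i \<tau> (Q \<omega>, Xi \<omega>))"
      using sqi_inner[OF sqi_nt[OF j s] sqi_nt[OF i t]] by (simp add: nt_def)
    fix q x y
    have "Wp j \<sigma> (q, x((i, \<tau>) := y)) = Wp j \<sigma> (q, x)"
      using ne by (intro Wp_upd) auto
    moreover have "(x((i, \<tau>) := y)) (j, \<sigma>) = x (j, \<sigma>)" using ne by auto
    ultimately show "nsp j \<sigma> (q, x((i, \<tau>) := y)) = nsp j \<sigma> (q, x)"
      by (simp add: nsp_def)
  qed
  then show ?thesis by (simp add: nt_def)
qed

definition "ntk k \<omega> = nt (fst k) (snd k) \<omega>"

lemma sqi_ntk: "k \<in> I \<Longrightarrow> sqi M (ntk k)"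
  unfolding ntk_def by (cases k) (auto intro: sqi_nt)

lemma E_nt_nt: "k \<in> I \<Longrightarrow> l \<in> I \<Longrightarrow> k \<noteq> l \<Longrightarrow> (\<integral>\<omega>. ntk l \<omega> \<bullet> ntk k \<omega> \<partial>M) = 0"
proof -
  assume k: "k \<in> I" and l: "l \<in> I" and ne: "k \<noteq> l"
  obtain i \<tau> j \<sigma> where kk: "k = (i, \<tau>)" and ll: "l = (j, \<sigma>)" by (cases k, cases l) auto
  have i: "i \<in> {1..N}" "\<tau> < K" and j: "j \<in> {1..N}" "\<sigma> < K" using k l kk ll by auto
  show ?thesis
  proof (cases "j \<noteq> i \<or> \<sigma> < \<tau>")
    case True
    then show ?thesis using E_nt_nt1[OF i j True] by (simp add: ntk_def kk ll)
  next
    case False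
    then have "i \<noteq> j \<or> \<tau> < \<sigma>" using ne kk ll by auto
    then have "(\<integral>\<omega>. nt i \<tau> \<omega> \<bullet> nt j \<sigma> \<omega> \<partial>M) = 0" using E_nt_nt1[OF j i] by simp
    then show ?thesis by (simp add: ntk_def kk ll inner_commute)
  qed
qed

lemma orth:
  assumes J: "J \<subseteq> I"
  shows "integrable M (\<lambda>\<omega>. (norm (\<Sum>k\<in>J. c k *\<^sub>R ntk k \<omega>))\<^sup>2)"
    and "(\<integral>\<omega>. (norm (\<Sum>k\<in>J. c k *\<^sub>R ntk k \<omega>))\<^sup>2 \<partial>M) \<le> (\<Sum>k\<in>J. (c k)\<^sup>2) * \<sigma>l\<^sup>2"
proof -
  have fin: "finite J" using J by (rule finite_subset) auto
  have sq: "sqi M (\<lambda>\<omega>. \<Sum>k\<in>J. c k *\<^sub>R ntk k \<omega>)"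
    using J by (intro sqi_sum sqi_scaleR sqi_ntk) auto
  then show "integrable M (\<lambda>\<omega>. (norm (\<Sum>k\<in>J. c k *\<^sub>R ntk k \<omega>))\<^sup>2)" by (rule sqi_int)
  have pw: "(norm (\<Sum>k\<in>J. c k *\<^sub>R ntk k \<omega>))\<^sup>2 = (\<Sum>k\<in>J. \<Sum>l\<in>J. c k * c l * (ntk l \<omega> \<bullet> ntk k \<omega>))" for \<omega>
    unfolding power2_norm_eq_inner inner_sum_left inner_sum_right
    by (simp add: algebra_simps sum_distrib_left)
  have int: "integrable M (\<lambda>\<omega>. ntk l \<omega> \<bullet> ntk k \<omega>)" if "k \<in> J" "l \<in> J" for k l
    using that J by (intro sqi_inner sqi_ntk) auto
  have "(\<integral>\<omega>. (norm (\<Sum>k\<in>J. c k *\<^sub>R ntk k \<omega>))\<^sup>2 \<partial>M) = (\<integral>\<omega>. (\<Sum>k\<in>J. \<Sum>l\<in>J. c k * c l * (ntk l \<omega> \<bullet> ntk k \<omega>)) \<partial>M)"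
    by (simp only: pw)
  also have "\<dots> = (\<Sum>k\<in>J. \<Sum>l\<in>J. c k * c l * (\<integral>\<omega>. ntk l \<omega> \<bullet> ntk k \<omega> \<partial>M))"
    using int by (simp add: Bochner_Integration.integral_sum integrable_sum)
  also have "\<dots> = (\<Sum>k\<in>J. (c k)\<^sup>2 * (\<integral>\<omega>. (norm (ntk k \<omega>))\<^sup>2 \<partial>M))"
  proof (rule sum.cong[OF refl])
    fix k assume k: "k \<in> J"
    have "(\<Sum>l\<in>J. c k * c l * (\<integral>\<omega>. ntk l \<omega> \<bullet> ntk k \<omega> \<partial>M)) =
          (\<Sum>l\<in>J. if l = k then c k * c k * (\<integral>\<omega>. ntk k \<omega> \<bullet> ntk k \<omega> \<partial>M) else 0)"
    proof (rule sum.cong[OF refl])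
      fix l assume l: "l \<in> J"
      show "c k * c l * (\<integral>\<omega>. ntk l \<omega> \<bullet> ntk k \<omega> \<partial>M) = (if l = k then c k * c k * (\<integral>\<omega>. ntk k \<omega> \<bullet> ntk k \<omega> \<partial>M) else 0)"
      proof (cases "l = k")
        case False
        have "k \<in> I" "l \<in> I" using J k l by auto
        then have "(\<integral>\<omega>. ntk l \<omega> \<bullet> ntk k \<omega> \<partial>M) = 0" using E_nt_nt False by metis
        then show ?thesis using False by simp
      qed simp
    qed
    also have "\<dots> = (c k)\<^sup>2 * (\<integral>\<omega>. (norm (ntk k \<omega>))\<^sup>2 \<partial>M)"
    proof -
      have eq: "(\<lambda>\<omega>. ntk k \<omega> \<bullet> ntk k \<omega>) = (\<lambda>\<omega>. (norm (ntk k \<omega>))\<^sup>2)"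
        by (simp add: power2_norm_eq_inner)
      show ?thesis using fin k by (simp add: eq power2_eq_square)
    qed
    finally show "(\<Sum>l\<in>J. c k * c l * (\<integral>\<omega>. ntk l \<omega> \<bullet> ntk k \<omega> \<partial>M)) = (c k)\<^sup>2 * (\<integral>\<omega>. (norm (ntk k \<omega>))\<^sup>2 \<partial>M)" .
  qed
  also have "\<dots> \<le> (\<Sum>k\<in>J. (c k)\<^sup>2 * \<sigma>l\<^sup>2)"
  proof (rule sum_mono)
    fix k assume k: "k \<in> J"
    then have "fst k \<in> {1..N}" "snd k < K" using J by auto
    then have "(\<integral>\<omega>. (norm (ntk k \<omega>))\<^sup>2 \<partial>M) \<le> \<sigma>l\<^sup>2"
      using var_bound(2) by (simp add: ntk_def nt_def)
    then show "(c k)\<^sup>2 * (\<integral>\<omega>. (norm (ntk k \<omega>))\<^sup>2 \<partial>M) \<le> (c k)\<^sup>2 * \<sigma>l\<^sup>2"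
      by (intro mult_left_mono) auto
  qed
  also have "\<dots> = (\<Sum>k\<in>J. (c k)\<^sup>2) * \<sigma>l\<^sup>2" by (simp add: sum_distrib_right)
  finally show "(\<integral>\<omega>. (norm (\<Sum>k\<in>J. c k *\<^sub>R ntk k \<omega>))\<^sup>2 \<partial>M) \<le> (\<Sum>k\<in>J. (c k)\<^sup>2) * \<sigma>l\<^sup>2" .
qed

end


lemma sq3: "(x + y + z)\<^sup>2 \<le> 3 * (x\<^sup>2 + y\<^sup>2 + (z::real)\<^sup>2)"
proof -
  have "0 \<le> (x - y)\<^sup>2 + (y - z)\<^sup>2 + (x - z)\<^sup>2" by simp
  then show ?thesis by (simp add: power2_eq_square algebra_simps)
qed

context LS2
begin

definition "EA = (\<integral>\<omega>. (norm (gf (Q \<omega>)))\<^sup>2 \<partial>M)"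

lemma EA_nonneg: "0 \<le> EA"
  unfolding EA_def by simp

lemma ht_sq: "i \<in> {1..N} \<Longrightarrow>
  (norm (ht i \<tau> \<omega>))\<^sup>2 \<le> 3 * L\<^sup>2 * (norm (Wt i \<tau> \<omega> - Q \<omega>))\<^sup>2 + 3 * \<sigma>g\<^sup>2 + 3 * (norm (gf (Q \<omega>)))\<^sup>2"
proof -
  assume i: "i \<in> {1..N}"
  have "(norm (ht i \<tau> \<omega>))\<^sup>2 \<le> (L * norm (Wt i \<tau> \<omega> - Q \<omega>) + \<bar>\<sigma>g\<bar> + norm (gf (Q \<omega>)))\<^sup>2"
    using ht_bound[OF i, of \<tau> \<omega>] by (intro power_mono) auto
  also have "\<dots> \<le> 3 * ((L * norm (Wt i \<tau> \<omega> - Q \<omega>))\<^sup>2 + \<bar>\<sigma>g\<bar>\<^sup>2 + (norm (gf (Q \<omega>)))\<^sup>2)"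
    by (rule sq3)
  finally show ?thesis by (simp add: power_mult_distrib algebra_simps)
qed

lemma sum_nt_reindex: "(\<Sum>s<\<tau>. nt i s \<omega>) = (\<Sum>k\<in>{i} \<times> {..<\<tau>}. 1 *\<^sub>R ntk k \<omega>)"
proof -
  have "{i} \<times> {..<\<tau>} = Pair i ` {..<\<tau>}" by auto
  then show ?thesis by (simp add: sum.reindex inj_on_def ntk_def)
qed

lemma client_rec:
  assumes i: "i \<in> {1..N}" and t: "\<tau> < K"
  shows "(\<integral>\<omega>. (norm (Wt i \<tau> \<omega> - Q \<omega>))\<^sup>2 \<partial>M) \<le>
    2 * \<eta>\<^sup>2 * real \<tau> * \<sigma>l\<^sup>2 + 2 * \<eta>\<^sup>2 * real \<tau> *
      (\<Sum>s<\<tau>. 3 * L\<^sup>2 * (\<integral>\<omega>. (norm (Wt i s \<omega> - Q \<omega>))\<^sup>2 \<partial>M) + (3 * \<sigma>g\<^sup>2 + 3 * EA))"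
proof -
  define X where "X \<omega> = (\<Sum>s<\<tau>. nt i s \<omega>)" for \<omega>
  have J: "{i} \<times> {..<\<tau>} \<subseteq> I" using i t by auto
  have Xint: "integrable M (\<lambda>\<omega>. (norm (X \<omega>))\<^sup>2)" and XE: "(\<integral>\<omega>. (norm (X \<omega>))\<^sup>2 \<partial>M) \<le> real \<tau> * \<sigma>l\<^sup>2"
    using orth[OF J, of "\<lambda>_. 1"] by (simp_all add: X_def sum_nt_reindex)
  have Wint: "integrable M (\<lambda>\<omega>. (norm (Wt i s \<omega> - Q \<omega>))\<^sup>2)" if "s \<le> K" for s
    using sqi_W[OF i that] by (rule sqi_int)
  have pw: "(norm (Wt i \<tau> \<omega> - Q \<omega>))\<^sup>2 \<le> 2 * \<eta>\<^sup>2 * (norm (X \<omega>))\<^sup>2 + 2 * \<eta>\<^sup>2 * real \<tau> *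
      (\<Sum>s<\<tau>. 3 * L\<^sup>2 * (norm (Wt i s \<omega> - Q \<omega>))\<^sup>2 + 3 * \<sigma>g\<^sup>2 + 3 * (norm (gf (Q \<omega>)))\<^sup>2)" for \<omega>
  proof -
    have "Wt i \<tau> \<omega> - Q \<omega> = - \<eta> *\<^sub>R (X \<omega> + (\<Sum>s<\<tau>. ht i s \<omega>))"
      using Wt_unroll[OF i, of \<tau> \<omega>] t by (simp add: X_def sum.distrib add.commute)
    then have e: "(norm (Wt i \<tau> \<omega> - Q \<omega>))\<^sup>2 = \<eta>\<^sup>2 * (norm (X \<omega> + (\<Sum>s<\<tau>. ht i s \<omega>)))\<^sup>2"
      by (simp add: power_mult_distrib)
    define R where "R = (\<Sum>s<\<tau>. 3 * L\<^sup>2 * (norm (Wt i s \<omega> - Q \<omega>))\<^sup>2 + 3 * \<sigma>g\<^sup>2 + 3 * (norm (gf (Q \<omega>)))\<^sup>2)"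
    have s1: "(norm (X \<omega> + (\<Sum>s<\<tau>. ht i s \<omega>)))\<^sup>2 \<le> 2 * (norm (X \<omega>))\<^sup>2 + 2 * (norm (\<Sum>s<\<tau>. ht i s \<omega>))\<^sup>2"
      by (rule sq_add_le)
    have s2: "(norm (\<Sum>s<\<tau>. ht i s \<omega>))\<^sup>2 \<le> real \<tau> * (\<Sum>s<\<tau>. (norm (ht i s \<omega>))\<^sup>2)"
      using norm_sum_sq1[of "\<lambda>s. ht i s \<omega>" "{..<\<tau>}"] by simp
    have s3: "(\<Sum>s<\<tau>. (norm (ht i s \<omega>))\<^sup>2) \<le> R"
      unfolding R_def by (intro sum_mono ht_sq[OF i])
    have s4: "real \<tau> * (\<Sum>s<\<tau>. (norm (ht i s \<omega>))\<^sup>2) \<le> real \<tau> * R"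
      using s3 by (intro mult_left_mono) auto
    have "(norm (X \<omega> + (\<Sum>s<\<tau>. ht i s \<omega>)))\<^sup>2 \<le> 2 * (norm (X \<omega>))\<^sup>2 + 2 * (real \<tau> * R)"
      using s1 s2 s4 by linarith
    then have "\<eta>\<^sup>2 * (norm (X \<omega> + (\<Sum>s<\<tau>. ht i s \<omega>)))\<^sup>2 \<le> \<eta>\<^sup>2 * (2 * (norm (X \<omega>))\<^sup>2 + 2 * (real \<tau> * R))"
      by (intro mult_left_mono) auto
    then show ?thesis unfolding e R_def by (simp add: algebra_simps)
  qed
  have "(\<integral>\<omega>. (norm (Wt i \<tau> \<omega> - Q \<omega>))\<^sup>2 \<partial>M) \<le> (\<integral>\<omega>. 2 * \<eta>\<^sup>2 * (norm (X \<omega>))\<^sup>2 + 2 * \<eta>\<^sup>2 * real \<tau> *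
      (\<Sum>s<\<tau>. 3 * L\<^sup>2 * (norm (Wt i s \<omega> - Q \<omega>))\<^sup>2 + 3 * \<sigma>g\<^sup>2 + 3 * (norm (gf (Q \<omega>)))\<^sup>2) \<partial>M)"
  proof (intro integral_mono pw Bochner_Integration.integrable_add integrable_mult_right Xint)
    show "integrable M (\<lambda>\<omega>. \<Sum>s<\<tau>. 3 * L\<^sup>2 * (norm (Wt i s \<omega> - Q \<omega>))\<^sup>2 + 3 * \<sigma>g\<^sup>2 + 3 * (norm (gf (Q \<omega>)))\<^sup>2)"
    proof (rule Bochner_Integration.integrable_sum)
      fix s assume "s \<in> {..<\<tau>}"
      then have "s \<le> K" using t by simp
      then show "integrable M (\<lambda>\<omega>. 3 * L\<^sup>2 * (norm (Wt i s \<omega> - Q \<omega>))\<^sup>2 + 3 * \<sigma>g\<^sup>2 + 3 * (norm (gf (Q \<omega>)))\<^sup>2)"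
        by (intro Bochner_Integration.integrable_add integrable_mult_right Wint gQ_int integrable_const)
    qed
    show "integrable M (\<lambda>\<omega>. (norm (Wt i \<tau> \<omega> - Q \<omega>))\<^sup>2)" using t by (intro Wint) simp
  qed
  also have "\<dots> = 2 * \<eta>\<^sup>2 * (\<integral>\<omega>. (norm (X \<omega>))\<^sup>2 \<partial>M) + 2 * \<eta>\<^sup>2 * real \<tau> *
      (\<Sum>s<\<tau>. 3 * L\<^sup>2 * (\<integral>\<omega>. (norm (Wt i s \<omega> - Q \<omega>))\<^sup>2 \<partial>M) + (3 * \<sigma>g\<^sup>2 + 3 * EA))"
  proof -
    have hint: "integrable M (\<lambda>\<omega>. 3 * L\<^sup>2 * (norm (Wt i s \<omega> - Q \<omega>))\<^sup>2 + (3 * \<sigma>g\<^sup>2 + 3 * (norm (gf (Q \<omega>)))\<^sup>2))"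
      if "s < \<tau>" for s
      using that t by (intro Bochner_Integration.integrable_add integrable_mult_right Wint gQ_int integrable_const) auto
    have hs: "(\<integral>\<omega>. 3 * L\<^sup>2 * (norm (Wt i s \<omega> - Q \<omega>))\<^sup>2 + (3 * \<sigma>g\<^sup>2 + 3 * (norm (gf (Q \<omega>)))\<^sup>2) \<partial>M)
        = 3 * L\<^sup>2 * (\<integral>\<omega>. (norm (Wt i s \<omega> - Q \<omega>))\<^sup>2 \<partial>M) + (3 * \<sigma>g\<^sup>2 + 3 * EA)" if "s < \<tau>" for s
    proof -
      have w: "integrable M (\<lambda>\<omega>. (norm (Wt i s \<omega> - Q \<omega>))\<^sup>2)" using that t by (intro Wint) auto
      show ?thesis
        using w gQ_int by (simp add: Bochner_Integration.integral_add prob_space EA_def)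
    qed
    have sint: "integrable M (\<lambda>\<omega>. \<Sum>s<\<tau>. 3 * L\<^sup>2 * (norm (Wt i s \<omega> - Q \<omega>))\<^sup>2 + (3 * \<sigma>g\<^sup>2 + 3 * (norm (gf (Q \<omega>)))\<^sup>2))"
      using hint by (intro Bochner_Integration.integrable_sum) auto
    have ss: "(\<integral>\<omega>. (\<Sum>s<\<tau>. 3 * L\<^sup>2 * (norm (Wt i s \<omega> - Q \<omega>))\<^sup>2 + (3 * \<sigma>g\<^sup>2 + 3 * (norm (gf (Q \<omega>)))\<^sup>2)) \<partial>M)
       = (\<Sum>s<\<tau>. 3 * L\<^sup>2 * (\<integral>\<omega>. (norm (Wt i s \<omega> - Q \<omega>))\<^sup>2 \<partial>M) + (3 * \<sigma>g\<^sup>2 + 3 * EA))"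
      using hint hs by (subst Bochner_Integration.integral_sum) auto
    have "(\<integral>\<omega>. 2 * \<eta>\<^sup>2 * (norm (X \<omega>))\<^sup>2 + 2 * \<eta>\<^sup>2 * real \<tau> *
      (\<Sum>s<\<tau>. 3 * L\<^sup>2 * (norm (Wt i s \<omega> - Q \<omega>))\<^sup>2 + (3 * \<sigma>g\<^sup>2 + 3 * (norm (gf (Q \<omega>)))\<^sup>2)) \<partial>M)
      = 2 * \<eta>\<^sup>2 * (\<integral>\<omega>. (norm (X \<omega>))\<^sup>2 \<partial>M) + 2 * \<eta>\<^sup>2 * real \<tau> *
      (\<integral>\<omega>. (\<Sum>s<\<tau>. 3 * L\<^sup>2 * (norm (Wt i s \<omega> - Q \<omega>))\<^sup>2 + (3 * \<sigma>g\<^sup>2 + 3 * (norm (gf (Q \<omega>)))\<^sup>2)) \<partial>M)"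
      using Xint sint by (simp add: Bochner_Integration.integral_add)
    then show ?thesis unfolding ss by (simp add: add.assoc)
  qed
  also have "\<dots> \<le> 2 * \<eta>\<^sup>2 * (real \<tau> * \<sigma>l\<^sup>2) + 2 * \<eta>\<^sup>2 * real \<tau> *
      (\<Sum>s<\<tau>. 3 * L\<^sup>2 * (\<integral>\<omega>. (norm (Wt i s \<omega> - Q \<omega>))\<^sup>2 \<partial>M) + (3 * \<sigma>g\<^sup>2 + 3 * EA))"
    using XE by (intro add_mono mult_left_mono) auto
  finally show ?thesis by (simp add: algebra_simps)
qed

end

locale LS3 = LS2 +
  assumes C_nonneg: "0 \<le> C"
begin

definition "Ssum = (\<Sum>i\<in>{1..N}. (p i)\<^sup>2)"

lemma Ssum_nonneg: "0 \<le> Ssum"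
  unfolding Ssum_def by (intro sum_nonneg) auto

lemma NS_ge1: "1 \<le> real N * Ssum"
proof -
  have "(\<Sum>i\<in>{1..N}. p i)\<^sup>2 \<le> (\<Sum>i\<in>{1..N}. (p i)\<^sup>2) * real (card {1..N})"
    by (rule sum_squared_le_sum_of_squares)
  then show ?thesis using p_sum by (simp add: Ssum_def mult.commute)
qed

lemma small: "L\<^sup>2 * \<eta>\<^sup>2 * (real K)\<^sup>2 \<le> 1/18"
proof -
  define x where "x = L\<^sup>2 * \<eta>\<^sup>2 * (real K)\<^sup>2"
  define y where "y = real N * Ssum"
  have e: "9 * L\<^sup>2 * \<eta>\<^sup>2 * (real K)\<^sup>2 * real N * (\<Sum>i\<in>{1..N}. (p i)\<^sup>2) = 9 * (x * y)"
    unfolding x_def y_def Ssum_def by (simp only: mult_ac)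
  have "9 * (x * y) \<le> 1/2" using cond1 C_nonneg unfolding e by linarith
  moreover have "x * 1 \<le> x * y" unfolding y_def x_def using NS_ge1 by (intro mult_left_mono) auto
  ultimately show ?thesis unfolding x_def[symmetric] by linarith
qed

lemma LetaK: "L * \<eta> * real K \<le> 1"
proof -
  have "(L * \<eta> * real K)\<^sup>2 = L\<^sup>2 * \<eta>\<^sup>2 * (real K)\<^sup>2" by (simp only: power_mult_distrib)
  then have "(L * \<eta> * real K)\<^sup>2 \<le> 1\<^sup>2" using small by simp
  moreover have "0 \<le> (1::real)" by simp
  ultimately show ?thesis by (rule power2_le_imp_le)
qed

lemma client_total:
  assumes i: "i \<in> {1..N}"
  shows "(\<Sum>\<tau><K. (\<integral>\<omega>. (norm (Wt i \<tau> \<omega> - Q \<omega>))\<^sup>2 \<partial>M))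
     \<le> 3/2 * \<eta>\<^sup>2 * (real K)\<^sup>2 * \<sigma>l\<^sup>2 + 3 * \<eta>\<^sup>2 * (real K)^3 * (3 * \<sigma>g\<^sup>2 + 3 * EA)"
proof (rule rec_bound)
  show "\<And>\<tau>. \<tau> < K \<Longrightarrow> 0 \<le> (\<integral>\<omega>. (norm (Wt i \<tau> \<omega> - Q \<omega>))\<^sup>2 \<partial>M)" by simp
  show "\<And>\<tau>. \<tau> < K \<Longrightarrow> (\<integral>\<omega>. (norm (Wt i \<tau> \<omega> - Q \<omega>))\<^sup>2 \<partial>M) \<le> 2 * \<eta>\<^sup>2 * real \<tau> * \<sigma>l\<^sup>2 + 2 * \<eta>\<^sup>2 * real \<tau> *
      (\<Sum>s<\<tau>. 3 * L\<^sup>2 * (\<integral>\<omega>. (norm (Wt i s \<omega> - Q \<omega>))\<^sup>2 \<partial>M) + (3 * \<sigma>g\<^sup>2 + 3 * EA))"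
    by (rule client_rec[OF i])
  show "0 \<le> \<sigma>l\<^sup>2" by simp
  show "0 \<le> 3 * \<sigma>g\<^sup>2 + 3 * EA" using EA_nonneg by simp
  show "6 * \<eta>\<^sup>2 * L\<^sup>2 * (real K)\<^sup>2 \<le> 1/3" using small by (simp add: algebra_simps)
qed

definition "Dl \<omega> = (\<Sum>k\<in>I. p (fst k) *\<^sub>R (ht (fst k) (snd k) \<omega> - gfi (fst k) (Q \<omega>)))"
definition "nn \<omega> = (\<Sum>k\<in>I. p (fst k) *\<^sub>R ntk k \<omega>)"

lemma sum_I: "(\<Sum>k\<in>I. g k) = (\<Sum>i\<in>{1..N}. \<Sum>\<tau><K. g (i, \<tau>))"
  by (simp add: sum.cartesian_product)

lemma sum_I_p2: "(\<Sum>k\<in>I. (p (fst k))\<^sup>2) = real K * Ssum"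
  unfolding sum_I by (simp add: Ssum_def sum_distrib_left)

lemma sqi_gfiQ: "i \<in> {1..N} \<Longrightarrow> sqi M (\<lambda>\<omega>. gfi i (Q \<omega>))"
proof -
  assume i: "i \<in> {1..N}"
  have "sqi M (\<lambda>\<omega>. ht i 0 \<omega>)" using sqi_ht'[OF i] by simp
  moreover have "ht i 0 \<omega> = gfi i (Q \<omega>)" for \<omega>
    using Wt_unroll[OF i, of 0 \<omega>] by (simp add: ht_def)
  ultimately show ?thesis by simp
qed

lemma sqi_Dl: "sqi M Dl"
proof -
  have "sqi M (\<lambda>\<omega>. \<Sum>k\<in>I. p (fst k) *\<^sub>R (ht (fst k) (snd k) \<omega> - gfi (fst k) (Q \<omega>)))"
    by (intro sqi_sum sqi_scaleR sqi_diff sqi_ht' sqi_gfiQ) auto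
  then show ?thesis by (simp add: Dl_def[abs_def])
qed

lemma sqi_nn: "sqi M nn"
proof -
  have "sqi M (\<lambda>\<omega>. \<Sum>k\<in>I. p (fst k) *\<^sub>R ntk k \<omega>)"
    by (intro sqi_sum sqi_scaleR sqi_ntk) auto
  then show ?thesis by (simp add: nn_def[abs_def])
qed

lemma Dl_bound: "(\<integral>\<omega>. (norm (Dl \<omega>))\<^sup>2 \<partial>M) \<le> real K * Ssum * L\<^sup>2 * real N *
   (3/2 * \<eta>\<^sup>2 * (real K)\<^sup>2 * \<sigma>l\<^sup>2 + 3 * \<eta>\<^sup>2 * (real K)^3 * (3 * \<sigma>g\<^sup>2 + 3 * EA))"
proof -
  have Wint: "integrable M (\<lambda>\<omega>. (norm (Wt (fst k) (snd k) \<omega> - Q \<omega>))\<^sup>2)" if "k \<in> I" for k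
    using that by (intro sqi_int sqi_W) auto
  have pw: "(norm (Dl \<omega>))\<^sup>2 \<le> real K * Ssum * L\<^sup>2 * (\<Sum>k\<in>I. (norm (Wt (fst k) (snd k) \<omega> - Q \<omega>))\<^sup>2)" for \<omega>
  proof -
    define P where "P = (\<Sum>k\<in>I. (p (fst k))\<^sup>2)"
    have P: "P = real K * Ssum" unfolding P_def by (rule sum_I_p2)
    have P0: "0 \<le> P" unfolding P_def by (intro sum_nonneg) auto
    have h1: "(norm (Dl \<omega>))\<^sup>2 \<le> P * (\<Sum>k\<in>I. (norm (ht (fst k) (snd k) \<omega> - gfi (fst k) (Q \<omega>)))\<^sup>2)"
      unfolding Dl_def P_def by (rule norm_sum_sq)
    have h2: "(\<Sum>k\<in>I. (norm (ht (fst k) (snd k) \<omega> - gfi (fst k) (Q \<omega>)))\<^sup>2) \<le> (\<Sum>k\<in>I. L\<^sup>2 * (norm (Wt (fst k) (snd k) \<omega> - Q \<omega>))\<^sup>2)"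
    proof (rule sum_mono)
      fix k assume k: "k \<in> I"
      then have "norm (ht (fst k) (snd k) \<omega> - gfi (fst k) (Q \<omega>)) \<le> L * norm (Wt (fst k) (snd k) \<omega> - Q \<omega>)"
        unfolding ht_def by (intro A1_fi) auto
      then have "(norm (ht (fst k) (snd k) \<omega> - gfi (fst k) (Q \<omega>)))\<^sup>2 \<le> (L * norm (Wt (fst k) (snd k) \<omega> - Q \<omega>))\<^sup>2"
        by (intro power_mono) auto
      then show "(norm (ht (fst k) (snd k) \<omega> - gfi (fst k) (Q \<omega>)))\<^sup>2 \<le> L\<^sup>2 * (norm (Wt (fst k) (snd k) \<omega> - Q \<omega>))\<^sup>2"
        by (simp only: power_mult_distrib)
    qed
    have h3: "P * (\<Sum>k\<in>I. (norm (ht (fst k) (snd k) \<omega> - gfi (fst k) (Q \<omega>)))\<^sup>2) \<le> P * (\<Sum>k\<in>I. L\<^sup>2 * (norm (Wt (fst k) (snd k) \<omega> - Q \<omega>))\<^sup>2)"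
      using h2 P0 by (rule mult_left_mono)
    have h4: "P * (\<Sum>k\<in>I. L\<^sup>2 * (norm (Wt (fst k) (snd k) \<omega> - Q \<omega>))\<^sup>2) = real K * Ssum * L\<^sup>2 * (\<Sum>k\<in>I. (norm (Wt (fst k) (snd k) \<omega> - Q \<omega>))\<^sup>2)"
      unfolding P sum_distrib_left[symmetric] by (simp only: mult.assoc)
    show ?thesis using h1 h3 h4 by linarith
  qed
  have "(\<integral>\<omega>. (norm (Dl \<omega>))\<^sup>2 \<partial>M) \<le> (\<integral>\<omega>. real K * Ssum * L\<^sup>2 * (\<Sum>k\<in>I. (norm (Wt (fst k) (snd k) \<omega> - Q \<omega>))\<^sup>2) \<partial>M)"
    using Wint by (intro integral_mono pw sqi_int[OF sqi_Dl] integrable_mult_right Bochner_Integration.integrable_sum) auto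
  also have "\<dots> = real K * Ssum * L\<^sup>2 * (\<Sum>k\<in>I. (\<integral>\<omega>. (norm (Wt (fst k) (snd k) \<omega> - Q \<omega>))\<^sup>2 \<partial>M))"
    using Wint by (simp add: Bochner_Integration.integral_sum)
  also have "(\<Sum>k\<in>I. (\<integral>\<omega>. (norm (Wt (fst k) (snd k) \<omega> - Q \<omega>))\<^sup>2 \<partial>M))
      \<le> (\<Sum>i\<in>{1..N}. 3/2 * \<eta>\<^sup>2 * (real K)\<^sup>2 * \<sigma>l\<^sup>2 + 3 * \<eta>\<^sup>2 * (real K)^3 * (3 * \<sigma>g\<^sup>2 + 3 * EA))"
    unfolding sum_I fst_conv snd_conv by (intro sum_mono client_total) simp
  also have "\<dots> = real N * (3/2 * \<eta>\<^sup>2 * (real K)\<^sup>2 * \<sigma>l\<^sup>2 + 3 * \<eta>\<^sup>2 * (real K)^3 * (3 * \<sigma>g\<^sup>2 + 3 * EA))"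
    by simp
  finally show ?thesis
    using Ssum_nonneg by (simp add: mult_left_mono mult.assoc)
qed

end


context LS3
begin

lemma nn_E: "(\<integral>\<omega>. (norm (nn \<omega>))\<^sup>2 \<partial>M) \<le> real K * Ssum * \<sigma>l\<^sup>2"
  using orth(2)[of I "\<lambda>k. p (fst k)"] sum_I_p2 by (simp add: nn_def)

lemma a_nn_E: "(\<integral>\<omega>. gf (Q \<omega>) \<bullet> nn \<omega> \<partial>M) = 0"
proof -
  have int: "integrable M (\<lambda>\<omega>. p (fst k) * (gf (Q \<omega>) \<bullet> ntk k \<omega>))" if "k \<in> I" for k
    using that by (intro integrable_mult_right sqi_inner sqi_a sqi_ntk)
  have "(\<integral>\<omega>. gf (Q \<omega>) \<bullet> nn \<omega> \<partial>M) = (\<integral>\<omega>. (\<Sum>k\<in>I. p (fst k) * (gf (Q \<omega>) \<bullet> ntk k \<omega>)) \<partial>M)"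
    by (simp add: nn_def inner_sum_right)
  also have "\<dots> = (\<Sum>k\<in>I. p (fst k) * (\<integral>\<omega>. gf (Q \<omega>) \<bullet> ntk k \<omega> \<partial>M))"
    using int by (simp add: Bochner_Integration.integral_sum)
  also have "\<dots> = 0"
  proof (rule sum.neutral, rule ballI)
    fix k assume "k \<in> I"
    then have "(\<integral>\<omega>. gf (Q \<omega>) \<bullet> ntk k \<omega> \<partial>M) = 0"
      using E_a_nt[of "fst k" "snd k"] by (auto simp: ntk_def)
    then show "p (fst k) * (\<integral>\<omega>. gf (Q \<omega>) \<bullet> ntk k \<omega> \<partial>M) = 0" by simp
  qed
  finally show ?thesis .
qed

lemma gsum_split: "gsum \<omega> = real K *\<^sub>R gf (Q \<omega>) + Dl \<omega> + nn \<omega>"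
proof -
  have "gsum \<omega> = (\<Sum>k\<in>I. p (fst k) *\<^sub>R (ht (fst k) (snd k) \<omega> + ntk k \<omega>))"
    unfolding gsum_def sum_I by (simp add: scaleR_sum_right ntk_def)
  also have "\<dots> = (\<Sum>k\<in>I. p (fst k) *\<^sub>R gfi (fst k) (Q \<omega>)) + Dl \<omega> + nn \<omega>"
    by (simp add: Dl_def nn_def scaleR_add_right scaleR_diff_right sum.distrib sum_subtractf algebra_simps)
  also have "(\<Sum>k\<in>I. p (fst k) *\<^sub>R gfi (fst k) (Q \<omega>)) = real K *\<^sub>R gf (Q \<omega>)"
    unfolding sum_I gf_sum by (simp del: sum_constant add: scaleR_sum_right sum_constant_scaleR mult.commute)
  finally show ?thesis .
qed

lemma Dl_zero: "N * K = 1 \<Longrightarrow> Dl \<omega> = 0"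
proof -
  assume "N * K = 1"
  then have NK: "N = 1" "K = 1" by auto
  have "Wt 1 0 \<omega> - Q \<omega> = 0" using Wt_unroll[of 1 0 \<omega>] N by simp
  then have "ht 1 0 \<omega> = gfi 1 (Q \<omega>)" by (simp add: ht_def)
  then have h: "ht 1 0 \<omega> - gfi 1 (Q \<omega>) = 0" by simp
  show ?thesis
    unfolding Dl_def
  proof (rule sum.neutral, rule ballI)
    fix k assume "k \<in> I"
    then have "k = (1, 0)" using NK by auto
    then show "p (fst k) *\<^sub>R (ht (fst k) (snd k) \<omega> - gfi (fst k) (Q \<omega>)) = 0" using h by simp
  qed
qed

definition "c2 = (if N * K = 1 then 1/2 else (1::real))"

lemma pointwise:
  "f (Q \<omega> - \<eta> *\<^sub>R gsum \<omega>) \<le> f (Q \<omega>) - \<eta> * real K / 2 * (norm (gf (Q \<omega>)))\<^sup>2 + \<eta> / real K * (norm (Dl \<omega>))\<^sup>2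
     + (L * real K * \<eta>\<^sup>2 - \<eta>) * (gf (Q \<omega>) \<bullet> nn \<omega>) + L * \<eta>\<^sup>2 * c2 * (norm (nn \<omega>))\<^sup>2"
proof -
  have s: "f (Q \<omega> - \<eta> *\<^sub>R gsum \<omega>) \<le> f (Q \<omega>) + gf (Q \<omega>) \<bullet> (Q \<omega> - \<eta> *\<^sub>R gsum \<omega> - Q \<omega>) + L / 2 * (norm (Q \<omega> - \<eta> *\<^sub>R gsum \<omega> - Q \<omega>))\<^sup>2"
    by (rule smooth(1)[OF f_grad A1_f])
  have k: "gf (Q \<omega>) \<bullet> (- \<eta> *\<^sub>R (real K *\<^sub>R gf (Q \<omega>) + Dl \<omega> + nn \<omega>)) + L / 2 * (norm (\<eta> *\<^sub>R (real K *\<^sub>R gf (Q \<omega>) + Dl \<omega> + nn \<omega>)))\<^sup>2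
     \<le> - \<eta> * real K / 2 * (norm (gf (Q \<omega>)))\<^sup>2 + \<eta> / real K * (norm (Dl \<omega>))\<^sup>2 + (L * real K * \<eta>\<^sup>2 - \<eta>) * (gf (Q \<omega>) \<bullet> nn \<omega>) + L * \<eta>\<^sup>2 * c2 * (norm (nn \<omega>))\<^sup>2"
  proof (rule key_alg[OF eta_pos _ L_nonneg LetaK])
    show "0 < real K" using K by simp
    show "Dl \<omega> = 0 \<and> c2 = 1/2 \<or> c2 = 1" using Dl_zero by (auto simp: c2_def)
  qed
  have e1: "Q \<omega> - \<eta> *\<^sub>R gsum \<omega> - Q \<omega> = - \<eta> *\<^sub>R (real K *\<^sub>R gf (Q \<omega>) + Dl \<omega> + nn \<omega>)"
    by (simp add: gsum_split)
  have e2: "norm (Q \<omega> - \<eta> *\<^sub>R gsum \<omega> - Q \<omega>) = norm (\<eta> *\<^sub>R (real K *\<^sub>R gf (Q \<omega>) + Dl \<omega> + nn \<omega>))"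
    by (simp add: gsum_split)
  have e3: "norm (- \<eta> *\<^sub>R (real K *\<^sub>R gf (Q \<omega>) + Dl \<omega> + nn \<omega>)) = norm (\<eta> *\<^sub>R (real K *\<^sub>R gf (Q \<omega>) + Dl \<omega> + nn \<omega>))"
    by (simp only: norm_scaleR abs_minus_cancel)
  show ?thesis using s k unfolding e1 e3 by linarith
qed


lemma sqi_gsum: "sqi M gsum"
proof -
  have "sqi M (\<lambda>\<omega>. real K *\<^sub>R gf (Q \<omega>) + Dl \<omega> + nn \<omega>)"
    by (intro sqi_add sqi_scaleR sqi_a sqi_Dl sqi_nn)
  moreover have "gsum = (\<lambda>\<omega>. real K *\<^sub>R gf (Q \<omega>) + Dl \<omega> + nn \<omega>)" by (rule ext) (rule gsum_split)
  ultimately show ?thesis by simp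
qed

lemma fV_int: "integrable M (\<lambda>\<omega>. f (Q \<omega> - \<eta> *\<^sub>R gsum \<omega>))"
proof -
  define U where "U \<omega> = - \<eta> *\<^sub>R gsum \<omega>" for \<omega>
  have sU: "sqi M U" unfolding U_def[abs_def] by (intro sqi_scaleR sqi_gsum)
  have Um: "U \<in> borel_measurable M" using sU by (simp add: sqi_def)
  have V: "Q \<omega> - \<eta> *\<^sub>R gsum \<omega> = Q \<omega> + U \<omega>" for \<omega> by (simp add: U_def)
  have fVm: "(\<lambda>\<omega>. f (Q \<omega> + U \<omega>)) \<in> borel_measurable M"
    using measurable_compose[OF borel_measurable_add[OF Q_meas Um] f_meas] by simp
  define d where "d \<omega> = f (Q \<omega> + U \<omega>) - f (Q \<omega>) - gf (Q \<omega>) \<bullet> U \<omega>" for \<omega>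
  have dm: "d \<in> borel_measurable M"
  proof -
    have fQm: "(\<lambda>\<omega>. f (Q \<omega>)) \<in> borel_measurable M" using measurable_compose[OF Q_meas f_meas] by simp
    show ?thesis unfolding d_def[abs_def]
      by (intro borel_measurable_diff fVm fQm borel_measurable_inner a_meas Um)
  qed
  have dbound: "norm (d \<omega>) \<le> norm (L / 2 * (norm (U \<omega>))\<^sup>2)" for \<omega>
  proof -
    have h1: "f (Q \<omega> + U \<omega>) \<le> f (Q \<omega>) + gf (Q \<omega>) \<bullet> (Q \<omega> + U \<omega> - Q \<omega>) + L / 2 * (norm (Q \<omega> + U \<omega> - Q \<omega>))\<^sup>2"
      by (rule smooth(1)[OF f_grad A1_f])
    have h2: "f (Q \<omega>) + gf (Q \<omega>) \<bullet> (Q \<omega> + U \<omega> - Q \<omega>) - L / 2 * (norm (Q \<omega> + U \<omega> - Q \<omega>))\<^sup>2 \<le> f (Q \<omega> + U \<omega>)"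
      by (rule smooth(2)[OF f_grad A1_f])
    have e: "Q \<omega> + U \<omega> - Q \<omega> = U \<omega>" by simp
    have h1': "f (Q \<omega> + U \<omega>) - f (Q \<omega>) - gf (Q \<omega>) \<bullet> U \<omega> \<le> L / 2 * (norm (U \<omega>))\<^sup>2"
      using h1 unfolding e by linarith
    have h2': "- (L / 2 * (norm (U \<omega>))\<^sup>2) \<le> f (Q \<omega> + U \<omega>) - f (Q \<omega>) - gf (Q \<omega>) \<bullet> U \<omega>"
      using h2 unfolding e by linarith
    have "\<bar>d \<omega>\<bar> \<le> L / 2 * (norm (U \<omega>))\<^sup>2" unfolding d_def using h1' h2' by (intro abs_leI) linarith+
    then show ?thesis using L_nonneg by simp
  qed
  have iU: "integrable M (\<lambda>\<omega>. L / 2 * (norm (U \<omega>))\<^sup>2)"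
    using sqi_int[OF sU] by (rule integrable_mult_right)
  have dint: "integrable M d"
    by (rule Bochner_Integration.integrable_bound[OF iU dm]) (rule AE_I2, rule dbound)
  have "integrable M (\<lambda>\<omega>. d \<omega> + f (Q \<omega>) + gf (Q \<omega>) \<bullet> U \<omega>)"
    by (intro Bochner_Integration.integrable_add dint fQ_int sqi_inner sqi_a sU)
  moreover have "(\<lambda>\<omega>. d \<omega> + f (Q \<omega>) + gf (Q \<omega>) \<bullet> U \<omega>) = (\<lambda>\<omega>. f (Q \<omega> - \<eta> *\<^sub>R gsum \<omega>))"
    by (rule ext) (simp add: d_def V)
  ultimately show ?thesis by simp
qed

lemma main_E:
  "(\<integral>\<omega>. f (Q \<omega> - \<eta> *\<^sub>R gsum \<omega>) \<partial>M)
     \<le> (\<integral>\<omega>. f (Q \<omega>) \<partial>M) - C * \<eta> * real K * EA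
       + 3/2 * L\<^sup>2 * \<eta>^3 * (real K)\<^sup>2 * real N * (\<sigma>l\<^sup>2 + 6 * real K * \<sigma>g\<^sup>2) * Ssum
       + L * \<eta>\<^sup>2 * (real K)\<^sup>2 * real N / 2 * \<sigma>l\<^sup>2 * Ssum"
proof -
  define Ef where "Ef = (\<integral>\<omega>. f (Q \<omega>) \<partial>M)"
  define Ed where "Ed = (\<integral>\<omega>. (norm (Dl \<omega>))\<^sup>2 \<partial>M)"
  define En where "En = (\<integral>\<omega>. (norm (nn \<omega>))\<^sup>2 \<partial>M)"
  define Ean where "Ean = (\<integral>\<omega>. gf (Q \<omega>) \<bullet> nn \<omega> \<partial>M)"
  have iD: "integrable M (\<lambda>\<omega>. (norm (Dl \<omega>))\<^sup>2)" by (rule sqi_int[OF sqi_Dl])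
  have iN: "integrable M (\<lambda>\<omega>. (norm (nn \<omega>))\<^sup>2)" by (rule sqi_int[OF sqi_nn])
  have iAN: "integrable M (\<lambda>\<omega>. gf (Q \<omega>) \<bullet> nn \<omega>)" by (rule sqi_inner[OF sqi_a sqi_nn])
  have "(\<integral>\<omega>. f (Q \<omega> - \<eta> *\<^sub>R gsum \<omega>) \<partial>M) \<le> (\<integral>\<omega>. f (Q \<omega>) - \<eta> * real K / 2 * (norm (gf (Q \<omega>)))\<^sup>2 + \<eta> / real K * (norm (Dl \<omega>))\<^sup>2
     + (L * real K * \<eta>\<^sup>2 - \<eta>) * (gf (Q \<omega>) \<bullet> nn \<omega>) + L * \<eta>\<^sup>2 * c2 * (norm (nn \<omega>))\<^sup>2 \<partial>M)"
    by (intro integral_mono fV_int pointwise Bochner_Integration.integrable_add Bochner_Integration.integrable_diff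
        integrable_mult_right fQ_int gQ_int iD iN iAN)
  also have "\<dots> = Ef - \<eta> * real K / 2 * EA + \<eta> / real K * Ed + (L * real K * \<eta>\<^sup>2 - \<eta>) * Ean + L * \<eta>\<^sup>2 * c2 * En"
    unfolding Ef_def EA_def Ed_def En_def Ean_def
    using fQ_int gQ_int iD iN iAN
    by (simp add: Bochner_Integration.integral_add Bochner_Integration.integral_diff
        Bochner_Integration.integrable_add Bochner_Integration.integrable_diff)
  finally have X: "(\<integral>\<omega>. f (Q \<omega> - \<eta> *\<^sub>R gsum \<omega>) \<partial>M) \<le> Ef - \<eta> * real K / 2 * EA + \<eta> / real K * Ed + L * \<eta>\<^sup>2 * c2 * En"
    using a_nn_E by (simp add: Ean_def)
  have Kpos: "0 < real K" using K by simp
  have T1: "\<eta> / real K * Ed \<le> \<eta> * Ssum * L\<^sup>2 * real N * (3/2 * \<eta>\<^sup>2 * (real K)\<^sup>2 * \<sigma>l\<^sup>2 + 9 * \<eta>\<^sup>2 * (real K)^3 * \<sigma>g\<^sup>2 + 9 * \<eta>\<^sup>2 * (real K)^3 * EA)"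
  proof -
    have "\<eta> / real K * Ed \<le> \<eta> / real K * (real K * Ssum * L\<^sup>2 * real N *
      (3/2 * \<eta>\<^sup>2 * (real K)\<^sup>2 * \<sigma>l\<^sup>2 + 3 * \<eta>\<^sup>2 * (real K)^3 * (3 * \<sigma>g\<^sup>2 + 3 * EA)))"
      unfolding Ed_def using Dl_bound eta_pos Kpos by (intro mult_left_mono) auto
    also have "\<dots> = \<eta> * Ssum * L\<^sup>2 * real N * (3/2 * \<eta>\<^sup>2 * (real K)\<^sup>2 * \<sigma>l\<^sup>2 + 9 * \<eta>\<^sup>2 * (real K)^3 * \<sigma>g\<^sup>2 + 9 * \<eta>\<^sup>2 * (real K)^3 * EA)"
      using Kpos by (simp add: field_simps)
    finally show ?thesis .
  qed
  have T2: "L * \<eta>\<^sup>2 * c2 * En \<le> L * \<eta>\<^sup>2 * (real K)\<^sup>2 * real N / 2 * \<sigma>l\<^sup>2 * Ssum"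
  proof -
    have c20: "0 \<le> L * \<eta>\<^sup>2 * c2" using L_nonneg by (simp add: c2_def)
    have "L * \<eta>\<^sup>2 * c2 * En \<le> L * \<eta>\<^sup>2 * c2 * (real K * Ssum * \<sigma>l\<^sup>2)"
      unfolding En_def using nn_E c20 by (intro mult_left_mono) auto
    also have "c2 * real K \<le> (real K)\<^sup>2 * real N / 2"
    proof (cases "N * K = 1")
      case True
      have c: "c2 = 1/2" unfolding c2_def by (rule if_P[OF True])
      from True have NK: "N = 1" "K = 1" by auto
      show ?thesis unfolding c using NK by simp
    next
      case False
      have "0 < N * K" using N K by simp
      then have "2 \<le> N * K" using False by linarith
      then have "real 2 \<le> real (N * K)" by (rule of_nat_mono)
      then have "2 \<le> real N * real K" by simp
      then have "2 * real K \<le> real N * real K * real K" using Kpos by (intro mult_right_mono) auto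
      then show ?thesis using False by (simp add: c2_def power2_eq_square algebra_simps)
    qed
    then have "L * \<eta>\<^sup>2 * c2 * (real K * Ssum * \<sigma>l\<^sup>2) \<le> L * \<eta>\<^sup>2 * ((real K)\<^sup>2 * real N / 2) * (Ssum * \<sigma>l\<^sup>2)"
    proof -
      assume h: "c2 * real K \<le> (real K)\<^sup>2 * real N / 2"
      have "(L * \<eta>\<^sup>2) * (c2 * real K) * (Ssum * \<sigma>l\<^sup>2) \<le> (L * \<eta>\<^sup>2) * ((real K)\<^sup>2 * real N / 2) * (Ssum * \<sigma>l\<^sup>2)"
        using h L_nonneg Ssum_nonneg by (intro mult_right_mono mult_left_mono) auto
      then show ?thesis by (simp add: algebra_simps)
    qed
    also have "\<dots> = L * \<eta>\<^sup>2 * (real K)\<^sup>2 * real N / 2 * \<sigma>l\<^sup>2 * Ssum" by (simp add: algebra_simps)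
    finally show ?thesis .
  qed
  have T3: "- \<eta> * real K / 2 * EA + \<eta> * Ssum * L\<^sup>2 * real N * (9 * \<eta>\<^sup>2 * (real K)^3 * EA) \<le> - C * \<eta> * real K * EA"
  proof -
    have c: "C \<le> 1/2 - 9 * L\<^sup>2 * \<eta>\<^sup>2 * (real K)\<^sup>2 * real N * Ssum" using cond1 by (simp add: Ssum_def)
    have "C * (\<eta> * real K * EA) \<le> (1/2 - 9 * L\<^sup>2 * \<eta>\<^sup>2 * (real K)\<^sup>2 * real N * Ssum) * (\<eta> * real K * EA)"
      using c eta_pos Kpos EA_nonneg by (intro mult_right_mono) auto
    then show ?thesis by (simp add: algebra_simps power2_eq_square power3_eq_cube)
  qed
  have E: "3/2 * L\<^sup>2 * \<eta>^3 * (real K)\<^sup>2 * real N * (\<sigma>l\<^sup>2 + 6 * real K * \<sigma>g\<^sup>2) * Ssum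
     = \<eta> * Ssum * L\<^sup>2 * real N * (3/2 * \<eta>\<^sup>2 * (real K)\<^sup>2 * \<sigma>l\<^sup>2 + 9 * \<eta>\<^sup>2 * (real K)^3 * \<sigma>g\<^sup>2)"
    by (simp add: algebra_simps power2_eq_square power3_eq_cube)
  have E2: "\<eta> * Ssum * L\<^sup>2 * real N * (3/2 * \<eta>\<^sup>2 * (real K)\<^sup>2 * \<sigma>l\<^sup>2 + 9 * \<eta>\<^sup>2 * (real K)^3 * \<sigma>g\<^sup>2 + 9 * \<eta>\<^sup>2 * (real K)^3 * EA)
     = \<eta> * Ssum * L\<^sup>2 * real N * (3/2 * \<eta>\<^sup>2 * (real K)\<^sup>2 * \<sigma>l\<^sup>2 + 9 * \<eta>\<^sup>2 * (real K)^3 * \<sigma>g\<^sup>2)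
       + \<eta> * Ssum * L\<^sup>2 * real N * (9 * \<eta>\<^sup>2 * (real K)^3 * EA)"
    by (simp add: algebra_simps)
  show ?thesis using X T1 T2 T3 E E2 unfolding Ef_def by linarith
qed

end

theorem lemma4:
  fixes M :: "'w measure" and S :: "'n measure" and dummy_d :: "'d::finite itself" and dummy_k :: "'k::finite itself"
    and N K :: nat and L \<eta> C \<sigma>l \<sigma>g :: real
    and p :: "nat \<Rightarrow> real"
    and f :: "('d, 'k) mat \<Rightarrow> real" and gf :: "('d, 'k) mat \<Rightarrow> ('d, 'k) mat"
    and fi :: "nat \<Rightarrow> ('d, 'k) mat \<Rightarrow> real" and gfi :: "nat \<Rightarrow> ('d, 'k) mat \<Rightarrow> ('d, 'k) mat"
    and G :: "nat \<Rightarrow> ('d, 'k) mat \<Rightarrow> 'n \<Rightarrow> ('d, 'k) mat"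
    and Q :: "'w \<Rightarrow> ('d, 'k) mat"
    and \<xi> :: "nat \<Rightarrow> nat \<Rightarrow> 'w \<Rightarrow> 'n"
  assumes prob: "prob_space M"
    and N: "N \<ge> 1" and K: "K \<ge> 1"
    and p_nonneg: "\<And>i. i \<in> {1..N} \<Longrightarrow> p i \<ge> 0"
    and p_sum: "(\<Sum>i\<in>{1..N}. p i) = 1"
    and f_def: "\<And>W. f W = (\<Sum>i\<in>{1..N}. p i * fi i W)"
    \<comment> \<open>differentiability, with gradients gf and gfi\<close>
    and f_grad: "\<And>W. (f has_derivative (\<lambda>H. gf W \<bullet> H)) (at W)"
    and fi_grad: "\<And>i W. i \<in> {1..N} \<Longrightarrow> (fi i has_derivative (\<lambda>H. gfi i W \<bullet> H)) (at W)"
    \<comment> \<open>(A1)\<close>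
    and A1_f: "\<And>W W'. norm (gf W - gf W') \<le> L * norm (W - W')"
    and A1_fi: "\<And>i W W'. i \<in> {1..N} \<Longrightarrow> norm (gfi i W - gfi i W') \<le> L * norm (W - W')"
    and A1_sample: "\<And>i x W W'. i \<in> {1..N} \<Longrightarrow> x \<in> space S \<Longrightarrow>
                      norm (G i W x - G i W' x) \<le> L * norm (W - W')"
    \<comment> \<open>measurability of the model and the oracle\<close>
    and Q_meas: "Q \<in> borel_measurable M"
    and xi_meas: "\<And>i \<tau>. \<xi> i \<tau> \<in> measurable M S"
    and G_meas: "\<And>i. i \<in> {1..N} \<Longrightarrow> (\<lambda>(W, x). G i W x) \<in> borel_measurable (borel \<Otimes>\<^sub>M S)"
    \<comment> \<open>fresh randomness per call: the noises are mutually independent and independent of Q_t\<close>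
    and xi_indep: "prob_space.indep_vars M (\<lambda>_. S) (\<lambda>(i, \<tau>). \<xi> i \<tau>) ({1..N} \<times> {..<K})"
    and Q_indep: "prob_space.indep_set M (sets (vimage_algebra (space M) Q borel))
                    (sets (vimage_algebra (space M)
                       (\<lambda>\<omega>. restrict (\<lambda>(i, \<tau>). \<xi> i \<tau> \<omega>) ({1..N} \<times> {..<K}))
                       (\<Pi>\<^sub>M j\<in>{1..N} \<times> {..<K}. S)))"
    \<comment> \<open>(A2): unbiasedness and bounded variance of every call\<close>
    and A2_int: "\<And>i \<tau> W. i \<in> {1..N} \<Longrightarrow> \<tau> < K \<Longrightarrow> integrable M (\<lambda>\<omega>. G i W (\<xi> i \<tau> \<omega>))"
    and A2_unbiased: "\<And>i \<tau> W. i \<in> {1..N} \<Longrightarrow> \<tau> < K \<Longrightarrow>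
                        (\<integral>\<omega>. G i W (\<xi> i \<tau> \<omega>) \<partial>M) = gfi i W"
    and A2_var_int: "\<And>i \<tau> W. i \<in> {1..N} \<Longrightarrow> \<tau> < K \<Longrightarrow>
                        integrable M (\<lambda>\<omega>. (norm (G i W (\<xi> i \<tau> \<omega>) - gfi i W))\<^sup>2)"
    and A2_var: "\<And>i \<tau> W. i \<in> {1..N} \<Longrightarrow> \<tau> < K \<Longrightarrow>
                        (\<integral>\<omega>. (norm (G i W (\<xi> i \<tau> \<omega>) - gfi i W))\<^sup>2 \<partial>M) \<le> \<sigma>l\<^sup>2"
    \<comment> \<open>(A3)\<close>
    and A3: "\<And>i W. i \<in> {1..N} \<Longrightarrow> (norm (gf W - gfi i W))\<^sup>2 \<le> \<sigma>g\<^sup>2"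
    and sg_pos: "\<sigma>g\<^sup>2 > 0"
    \<comment> \<open>the expectations on the right-hand side exist\<close>
    and fQ_int: "integrable M (\<lambda>\<omega>. f (Q \<omega>))"
    and gQ_int: "integrable M (\<lambda>\<omega>. (norm (gf (Q \<omega>)))\<^sup>2)"
    \<comment> \<open>step size and the two conditions of the lemma\<close>
    and eta_pos: "\<eta> > 0"
    and C_pos: "C > 0"
    and cond1: "1/2 - 9 * L\<^sup>2 * \<eta>\<^sup>2 * (real K)\<^sup>2 * real N * (\<Sum>i\<in>{1..N}. (p i)\<^sup>2) \<ge> C"
    and cond2: "L * \<eta>\<^sup>2 * real K / 2 - \<eta> / 2 \<le> 0"
  shows "(\<integral>\<omega>. f (V_next G p N K \<eta> (\<lambda>i \<tau>. \<xi> i \<tau> \<omega>) (Q \<omega>)) \<partial>M)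
         \<le> (\<integral>\<omega>. f (Q \<omega>) \<partial>M)
            - C * \<eta> * real K * (\<integral>\<omega>. (norm (gf (Q \<omega>)))\<^sup>2 \<partial>M)
            + 3/2 * L\<^sup>2 * \<eta>^3 * (real K)\<^sup>2 * real N * (\<sigma>l\<^sup>2 + 6 * real K * \<sigma>g\<^sup>2) * (\<Sum>i\<in>{1..N}. (p i)\<^sup>2)
            + L * \<eta>\<^sup>2 * (real K)\<^sup>2 * real N / 2 * \<sigma>l\<^sup>2 * (\<Sum>i\<in>{1..N}. (p i)\<^sup>2)"
proof -
  interpret L3: LS3 M S N K \<eta> \<sigma>l L G gfi Q \<xi> C \<sigma>g p f gf fi
  proof (intro LS3.intro LS2.intro LS.intro LS_axioms.intro LS2_axioms.intro LS3_axioms.intro)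
    show "prob_space M" by (rule prob)
  qed (fact | use C_pos in simp)+
  have "(\<integral>\<omega>. f (V_next G p N K \<eta> (\<lambda>i \<tau>. \<xi> i \<tau> \<omega>) (Q \<omega>)) \<partial>M)
      = (\<integral>\<omega>. f (Q \<omega> - \<eta> *\<^sub>R L3.gsum \<omega>) \<partial>M)"
    by (simp add: L3.V_eq)
  also have "\<dots> \<le> (\<integral>\<omega>. f (Q \<omega>) \<partial>M) - C * \<eta> * real K * L3.EA
       + 3/2 * L\<^sup>2 * \<eta>^3 * (real K)\<^sup>2 * real N * (\<sigma>l\<^sup>2 + 6 * real K * \<sigma>g\<^sup>2) * L3.Ssum
       + L * \<eta>\<^sup>2 * (real K)\<^sup>2 * real N / 2 * \<sigma>l\<^sup>2 * L3.Ssum"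
    by (rule L3.main_E)
  finally show ?thesis by (simp add: L3.EA_def L3.Ssum_def)
qed

end
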